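(* Let $\mathbf Z$ be the full subcategory of monoidal categories that are monoidally equivalent to the terminal monoidal category $\mathbf 1$ (equivalently, monoidal categories in which between any two objects there is exactly one morphism). Then $\mathbf Z$ is a reflective and coreflective subcategory both of the category $\mathbf{MC}$ of small monoidal categories and strong monoidal functors, and of the category $\mathbf{SMC}$ of small symmetric monoidal categories and symmetric strong monoidal functors. For every monoidal category $\mathcal M$, the functor $\eta_{\mathcal M}\colon\mathcal M\to R(\mathcal M)$ is the reflection of $\mathcal M$ into $\mathbf Z$ and the functor $\epsilon_{\mathcal M}\colon S(\mathcal M)\to\mathcal M$ is the coreflection of $\mathcal M$ into $\mathbf Z$.
   Context: Let $(\mathcal M,\otimes,I,a,\ell,r)$ be a monoidal category. $R(\mathcal M)$ is the monoidal category with the same objects as $\mathcal M$, exactly one morphism between any two objects, tensor product on objects as in $\mathcal M$ and unit $I$; $\eta_{\mathcal M}\colon\mathcal M\to R(\mathcal M)$ is the unique functor which is the identity on objects (it is strong monoidal, and symmetric when $\mathcal M$ is symmetric). $S(\mathcal M)$ is the monoidal category whose objects are pairs $(X,x)$ with $X$ an object of $\mathcal M$ and $x\colon X\to I$ an isomorphism; a morphism $(X,x)\to(Y,y)$ is a morphism $f\colon X\to Y$ of $\mathcal M$ with $y\circ f=x$ (so it is uniquely $y^{-1}x$); composition and identities as in $\mathcal M$; $(X,x)\otimes(Y,y)=(X\otimes Y,\ \ell_I\circ(x\otimes y))$ where $\ell_I=r_I\colon I\otimes I\to I$; tensor of morphisms as in $\mathcal M$; unit $(I,\mathrm{id}_I)$;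 associators and unitors as in $\mathcal M$. $\epsilon_{\mathcal M}\colon S(\mathcal M)\to\mathcal M$ sends $(X,x)\mapsto X$ and $f\mapsto f$ (strong monoidal, symmetric when $\mathcal M$ is symmetric). All categories are regarded as 1-categories. *)

theory Defs
  imports Main
begin

record ('o,'a) mcat =
  mOb   :: "'o set"
  mAr   :: "'a set"
  mDom  :: "'a \<Rightarrow> 'o"
  mCod  :: "'a \<Rightarrow> 'o"
  mId   :: "'o \<Rightarrow> 'a"
  mComp :: "'a \<Rightarrow> 'a \<Rightarrow> 'a"   (* mComp g f = g o f *)
  mTen  :: "'o \<Rightarrow> 'o \<Rightarrow> 'o"
  mTenA :: "'a \<Rightarrow> 'a \<Rightarrow> 'a"
  mUnit :: "'o"
  mAssoc :: "'o \<Rightarrow> 'o \<Rightarrow> 'o \<Rightarrow> 'a"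
  mLu   :: "'o \<Rightarrow> 'a"
  mRu   :: "'o \<Rightarrow> 'a"

definition hom :: "('o,'a) mcat \<Rightarrow> 'o \<Rightarrow> 'o \<Rightarrow> 'a set" where
  "hom C X Y = {f \<in> mAr C. mDom C f = X \<and> mCod C f = Y}"

definition category :: "('o,'a) mcat \<Rightarrow> bool" where
  "category C \<longleftrightarrow>
     (\<forall>f\<in>mAr C. mDom C f \<in> mOb C \<and> mCod C f \<in> mOb C) \<and>
     (\<forall>X\<in>mOb C. mId C X \<in> hom C X X) \<and>
     (\<forall>f\<in>mAr C. \<forall>g\<in>mAr C. mCod C f = mDom C g \<longrightarrow>
         mComp C g f \<in> hom C (mDom C f) (mCod C g)) \<and>
     (\<forall>f\<in>mAr C. mComp C f (mId C (mDom C f)) = f \<and> mComp C (mId C (mCod C f)) f = f) \<and>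
     (\<forall>f\<in>mAr C. \<forall>g\<in>mAr C. \<forall>h\<in>mAr C. mCod C f = mDom C g \<longrightarrow> mCod C g = mDom C h \<longrightarrow>
         mComp C h (mComp C g f) = mComp C (mComp C h g) f)"

definition iso :: "('o,'a) mcat \<Rightarrow> 'a \<Rightarrow> bool" where
  "iso C f \<longleftrightarrow> f \<in> mAr C \<and>
     (\<exists>g\<in>hom C (mCod C f) (mDom C f).
        mComp C g f = mId C (mDom C f) \<and> mComp C f g = mId C (mCod C f))"

definition monoidal :: "('o,'a) mcat \<Rightarrow> bool" where
  "monoidal C \<longleftrightarrow> category C \<and>
     mUnit C \<in> mOb C \<and>
     (\<forall>X\<in>mOb C. \<forall>Y\<in>mOb C. mTen C X Y \<in> mOb C) \<and>
     (\<forall>f\<in>mAr C. \<forall>g\<in>mAr C. mTenA C f g \<in>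
         hom C (mTen C (mDom C f) (mDom C g)) (mTen C (mCod C f) (mCod C g))) \<and>
     (\<forall>X\<in>mOb C. \<forall>Y\<in>mOb C. mTenA C (mId C X) (mId C Y) = mId C (mTen C X Y)) \<and>
     (\<forall>f\<in>mAr C. \<forall>f'\<in>mAr C. \<forall>g\<in>mAr C. \<forall>g'\<in>mAr C.
         mCod C f = mDom C f' \<longrightarrow> mCod C g = mDom C g' \<longrightarrow>
         mTenA C (mComp C f' f) (mComp C g' g) = mComp C (mTenA C f' g') (mTenA C f g)) \<and>
     (\<forall>X\<in>mOb C. \<forall>Y\<in>mOb C. \<forall>Z\<in>mOb C.
         mAssoc C X Y Z \<in> hom C (mTen C (mTen C X Y) Z) (mTen C X (mTen C Y Z)) \<and>
         iso C (mAssoc C X Y Z)) \<and>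
     (\<forall>X\<in>mOb C. mLu C X \<in> hom C (mTen C (mUnit C) X) X \<and> iso C (mLu C X)) \<and>
     (\<forall>X\<in>mOb C. mRu C X \<in> hom C (mTen C X (mUnit C)) X \<and> iso C (mRu C X)) \<and>
     (\<forall>f\<in>mAr C. \<forall>g\<in>mAr C. \<forall>h\<in>mAr C.
         mComp C (mAssoc C (mCod C f) (mCod C g) (mCod C h)) (mTenA C (mTenA C f g) h) =
         mComp C (mTenA C f (mTenA C g h)) (mAssoc C (mDom C f) (mDom C g) (mDom C h))) \<and>
     (\<forall>f\<in>mAr C. mComp C (mLu C (mCod C f)) (mTenA C (mId C (mUnit C)) f) =
                 mComp C f (mLu C (mDom C f))) \<and>
     (\<forall>f\<in>mAr C. mComp C (mRu C (mCod C f)) (mTenA C f (mId C (mUnit C))) =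
                 mComp C f (mRu C (mDom C f))) \<and>
     (\<forall>W\<in>mOb C. \<forall>X\<in>mOb C. \<forall>Y\<in>mOb C. \<forall>Z\<in>mOb C.
         mComp C (mAssoc C W X (mTen C Y Z)) (mAssoc C (mTen C W X) Y Z) =
         mComp C (mTenA C (mId C W) (mAssoc C X Y Z))
           (mComp C (mAssoc C W (mTen C X Y) Z) (mTenA C (mAssoc C W X Y) (mId C Z)))) \<and>
     (\<forall>X\<in>mOb C. \<forall>Y\<in>mOb C.
         mComp C (mTenA C (mId C X) (mLu C Y)) (mAssoc C X (mUnit C) Y) =
         mTenA C (mRu C X) (mId C Y))"

definition symmetric :: "('o,'a) mcat \<Rightarrow> ('o \<Rightarrow> 'o \<Rightarrow> 'a) \<Rightarrow> bool" where
  "symmetric C s \<longleftrightarrow> monoidal C \<and>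
     (\<forall>X\<in>mOb C. \<forall>Y\<in>mOb C. s X Y \<in> hom C (mTen C X Y) (mTen C Y X)) \<and>
     (\<forall>f\<in>mAr C. \<forall>g\<in>mAr C.
         mComp C (s (mCod C f) (mCod C g)) (mTenA C f g) =
         mComp C (mTenA C g f) (s (mDom C f) (mDom C g))) \<and>
     (\<forall>X\<in>mOb C. \<forall>Y\<in>mOb C. mComp C (s Y X) (s X Y) = mId C (mTen C X Y)) \<and>
     (\<forall>X\<in>mOb C. \<forall>Y\<in>mOb C. \<forall>Z\<in>mOb C.
         mComp C (mAssoc C Y Z X) (mComp C (s X (mTen C Y Z)) (mAssoc C X Y Z)) =
         mComp C (mTenA C (mId C Y) (s X Z))
           (mComp C (mAssoc C Y X Z) (mTenA C (s X Y) (mId C Z))))"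

record ('o,'a,'p,'b) smf =
  fO    :: "'o \<Rightarrow> 'p"
  fA    :: "'a \<Rightarrow> 'b"
  fPhi  :: "'o \<Rightarrow> 'o \<Rightarrow> 'b"
  fPhi0 :: "'b"

definition is_functor :: "('o,'a) mcat \<Rightarrow> ('p,'b) mcat \<Rightarrow> ('o,'a,'p,'b) smf \<Rightarrow> bool" where
  "is_functor C D F \<longleftrightarrow>
     (\<forall>X\<in>mOb C. fO F X \<in> mOb D \<and> fA F (mId C X) = mId D (fO F X)) \<and>
     (\<forall>f\<in>mAr C. fA F f \<in> hom D (fO F (mDom C f)) (fO F (mCod C f))) \<and>
     (\<forall>f\<in>mAr C. \<forall>g\<in>mAr C. mCod C f = mDom C g \<longrightarrow>
         fA F (mComp C g f) = mComp D (fA F g) (fA F f))"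

definition strong_monoidal :: "('o,'a) mcat \<Rightarrow> ('p,'b) mcat \<Rightarrow> ('o,'a,'p,'b) smf \<Rightarrow> bool" where
  "strong_monoidal C D F \<longleftrightarrow> monoidal C \<and> monoidal D \<and> is_functor C D F \<and>
     fPhi0 F \<in> hom D (mUnit D) (fO F (mUnit C)) \<and> iso D (fPhi0 F) \<and>
     (\<forall>X\<in>mOb C. \<forall>Y\<in>mOb C.
         fPhi F X Y \<in> hom D (mTen D (fO F X) (fO F Y)) (fO F (mTen C X Y)) \<and>
         iso D (fPhi F X Y)) \<and>
     (\<forall>f\<in>mAr C. \<forall>g\<in>mAr C.
         mComp D (fPhi F (mCod C f) (mCod C g)) (mTenA D (fA F f) (fA F g)) =
         mComp D (fA F (mTenA C f g)) (fPhi F (mDom C f) (mDom C g))) \<and>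
     (\<forall>X\<in>mOb C. \<forall>Y\<in>mOb C. \<forall>Z\<in>mOb C.
         mComp D (fA F (mAssoc C X Y Z))
           (mComp D (fPhi F (mTen C X Y) Z) (mTenA D (fPhi F X Y) (mId D (fO F Z)))) =
         mComp D (fPhi F X (mTen C Y Z))
           (mComp D (mTenA D (mId D (fO F X)) (fPhi F Y Z))
              (mAssoc D (fO F X) (fO F Y) (fO F Z)))) \<and>
     (\<forall>X\<in>mOb C.
         mLu D (fO F X) =
         mComp D (fA F (mLu C X))
           (mComp D (fPhi F (mUnit C) X) (mTenA D (fPhi0 F) (mId D (fO F X))))) \<and>
     (\<forall>X\<in>mOb C.
         mRu D (fO F X) =
         mComp D (fA F (mRu C X))
           (mComp D (fPhi F X (mUnit C)) (mTenA D (mId D (fO F X)) (fPhi0 F))))"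

definition symmetric_strong_monoidal ::
  "('o,'a) mcat \<Rightarrow> ('o \<Rightarrow> 'o \<Rightarrow> 'a) \<Rightarrow> ('p,'b) mcat \<Rightarrow> ('p \<Rightarrow> 'p \<Rightarrow> 'b)
     \<Rightarrow> ('o,'a,'p,'b) smf \<Rightarrow> bool" where
  "symmetric_strong_monoidal C s D t F \<longleftrightarrow>
     symmetric C s \<and> symmetric D t \<and> strong_monoidal C D F \<and>
     (\<forall>X\<in>mOb C. \<forall>Y\<in>mOb C.
        mComp D (fA F (s X Y)) (fPhi F X Y) = mComp D (fPhi F Y X) (t (fO F X) (fO F Y)))"

definition smf_comp :: "('q,'c) mcat \<Rightarrow> ('p,'b,'q,'c) smf \<Rightarrow> ('o,'a,'p,'b) smf \<Rightarrow> ('o,'a,'q,'c) smf" where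
  "smf_comp E G F =
     \<lparr> fO = (\<lambda>X. fO G (fO F X)), fA = (\<lambda>f. fA G (fA F f)),
       fPhi = (\<lambda>X Y. mComp E (fA G (fPhi F X Y)) (fPhi G (fO F X) (fO F Y))),
       fPhi0 = mComp E (fA G (fPhi0 F)) (fPhi0 G) \<rparr>"

definition smf_eq :: "('o,'a) mcat \<Rightarrow> ('o,'a,'p,'b) smf \<Rightarrow> ('o,'a,'p,'b) smf \<Rightarrow> bool" where
  "smf_eq C F G \<longleftrightarrow>
     (\<forall>X\<in>mOb C. fO F X = fO G X) \<and> (\<forall>f\<in>mAr C. fA F f = fA G f) \<and>
     (\<forall>X\<in>mOb C. \<forall>Y\<in>mOb C. fPhi F X Y = fPhi G X Y) \<and> fPhi0 F = fPhi0 G"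

definition in_Z :: "('o,'a) mcat \<Rightarrow> bool" where
  "in_Z C \<longleftrightarrow> monoidal C \<and> (\<forall>X\<in>mOb C. \<forall>Y\<in>mOb C. \<exists>!f. f \<in> hom C X Y)"

definition R :: "('o,'a) mcat \<Rightarrow> ('o, 'o \<times> 'o) mcat" where
  "R M = \<lparr> mOb = mOb M, mAr = mOb M \<times> mOb M, mDom = fst, mCod = snd,
     mId = (\<lambda>X. (X, X)), mComp = (\<lambda>g f. (fst f, snd g)),
     mTen = mTen M, mTenA = (\<lambda>f g. (mTen M (fst f) (fst g), mTen M (snd f) (snd g))),
     mUnit = mUnit M,
     mAssoc = (\<lambda>X Y Z. (mTen M (mTen M X Y) Z, mTen M X (mTen M Y Z))),
     mLu = (\<lambda>X. (mTen M (mUnit M) X, X)), mRu = (\<lambda>X. (mTen M X (mUnit M), X)) \<rparr>"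

definition Rsym :: "('o,'a) mcat \<Rightarrow> 'o \<Rightarrow> 'o \<Rightarrow> 'o \<times> 'o" where
  "Rsym M X Y = (mTen M X Y, mTen M Y X)"

definition eta :: "('o,'a) mcat \<Rightarrow> ('o,'a,'o,'o \<times> 'o) smf" where
  "eta M = \<lparr> fO = (\<lambda>X. X), fA = (\<lambda>f. (mDom M f, mCod M f)),
     fPhi = (\<lambda>X Y. (mTen M X Y, mTen M X Y)), fPhi0 = (mUnit M, mUnit M) \<rparr>"

text \<open>Objects (X,x) with x : X -> I an isomorphism; a morphism (X,x) -> (Y,y) is
  encoded as the triple ((X,x), f, (Y,y)) with y o f = x.\<close>
definition S_ob :: "('o,'a) mcat \<Rightarrow> ('o \<times> 'a) set" where
  "S_ob M = {(X, x). X \<in> mOb M \<and> x \<in> hom M X (mUnit M) \<and> iso M x}"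

definition S :: "('o,'a) mcat \<Rightarrow> ('o \<times> 'a, ('o \<times> 'a) \<times> 'a \<times> ('o \<times> 'a)) mcat" where
  "S M = (let tO = (\<lambda>A B. (mTen M (fst A) (fst B),
                         mComp M (mLu M (mUnit M)) (mTenA M (snd A) (snd B)))) in
     \<lparr> mOb = S_ob M,
       mAr = {(A, f, B). A \<in> S_ob M \<and> B \<in> S_ob M \<and> f \<in> hom M (fst A) (fst B) \<and>
                          mComp M (snd B) f = snd A},
       mDom = fst, mCod = (\<lambda>u. snd (snd u)),
       mId = (\<lambda>A. (A, mId M (fst A), A)),
       mComp = (\<lambda>g f. (fst f, mComp M (fst (snd g)) (fst (snd f)), snd (snd g))),
       mTen = tO,
       mTenA = (\<lambda>f g. (tO (fst f) (fst g), mTenA M (fst (snd f)) (fst (snd g)),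
                        tO (snd (snd f)) (snd (snd g)))),
       mUnit = (mUnit M, mId M (mUnit M)),
       mAssoc = (\<lambda>A B C. (tO (tO A B) C, mAssoc M (fst A) (fst B) (fst C), tO A (tO B C))),
       mLu = (\<lambda>A. (tO (mUnit M, mId M (mUnit M)) A, mLu M (fst A), A)),
       mRu = (\<lambda>A. (tO A (mUnit M, mId M (mUnit M)), mRu M (fst A), A)) \<rparr>)"

definition Ssym :: "('o,'a) mcat \<Rightarrow> ('o \<Rightarrow> 'o \<Rightarrow> 'a)
    \<Rightarrow> 'o \<times> 'a \<Rightarrow> 'o \<times> 'a \<Rightarrow> ('o \<times> 'a) \<times> 'a \<times> ('o \<times> 'a)" where
  "Ssym M s A B = (mTen (S M) A B, s (fst A) (fst B), mTen (S M) B A)"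

definition eps :: "('o,'a) mcat \<Rightarrow> ('o \<times> 'a, ('o \<times> 'a) \<times> 'a \<times> ('o \<times> 'a), 'o, 'a) smf" where
  "eps M = \<lparr> fO = fst, fA = (\<lambda>u. fst (snd u)),
     fPhi = (\<lambda>A B. mId M (mTen M (fst A) (fst B))), fPhi0 = mId M (mUnit M) \<rparr>"

text \<open>Reflection of M into Z along e : M -> RM, in MC, tested against one N and F.\<close>
definition refl_univ :: "('o,'a) mcat \<Rightarrow> ('r,'s) mcat \<Rightarrow> ('o,'a,'r,'s) smf
    \<Rightarrow> ('p,'b) mcat \<Rightarrow> ('o,'a,'p,'b) smf \<Rightarrow> bool" where
  "refl_univ M RM e N F \<longleftrightarrow> (in_Z N \<and> strong_monoidal M N F \<longrightarrow>
     (\<exists>G. strong_monoidal RM N G \<and> smf_eq M (smf_comp N G e) F) \<and>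
     (\<forall>G G'. strong_monoidal RM N G \<and> smf_eq M (smf_comp N G e) F \<and>
             strong_monoidal RM N G' \<and> smf_eq M (smf_comp N G' e) F \<longrightarrow> smf_eq RM G G'))"

definition sym_refl_univ :: "('o,'a) mcat \<Rightarrow> ('r,'s) mcat \<Rightarrow> ('r \<Rightarrow> 'r \<Rightarrow> 's)
    \<Rightarrow> ('o,'a,'r,'s) smf \<Rightarrow> ('o \<Rightarrow> 'o \<Rightarrow> 'a)
    \<Rightarrow> ('p,'b) mcat \<Rightarrow> ('p \<Rightarrow> 'p \<Rightarrow> 'b) \<Rightarrow> ('o,'a,'p,'b) smf \<Rightarrow> bool" where
  "sym_refl_univ M RM r e s N t F \<longleftrightarrow> (in_Z N \<and> symmetric_strong_monoidal M s N t F \<longrightarrow>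
     (\<exists>G. symmetric_strong_monoidal RM r N t G \<and> smf_eq M (smf_comp N G e) F) \<and>
     (\<forall>G G'. symmetric_strong_monoidal RM r N t G \<and> smf_eq M (smf_comp N G e) F \<and>
             symmetric_strong_monoidal RM r N t G' \<and> smf_eq M (smf_comp N G' e) F
             \<longrightarrow> smf_eq RM G G'))"

text \<open>Coreflection of M into Z along e : SM -> M, tested against one N and F : N -> M.\<close>
definition corefl_univ :: "('o,'a) mcat \<Rightarrow> ('r,'s) mcat \<Rightarrow> ('r,'s,'o,'a) smf
    \<Rightarrow> ('p,'b) mcat \<Rightarrow> ('p,'b,'o,'a) smf \<Rightarrow> bool" where
  "corefl_univ M SM e N F \<longleftrightarrow> (in_Z N \<and> strong_monoidal N M F \<longrightarrow>
     (\<exists>G. strong_monoidal N SM G \<and> smf_eq N (smf_comp M e G) F) \<and>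
     (\<forall>G G'. strong_monoidal N SM G \<and> smf_eq N (smf_comp M e G) F \<and>
             strong_monoidal N SM G' \<and> smf_eq N (smf_comp M e G') F \<longrightarrow> smf_eq N G G'))"

definition sym_corefl_univ :: "('o,'a) mcat \<Rightarrow> ('r,'s) mcat \<Rightarrow> ('r \<Rightarrow> 'r \<Rightarrow> 's)
    \<Rightarrow> ('r,'s,'o,'a) smf \<Rightarrow> ('o \<Rightarrow> 'o \<Rightarrow> 'a)
    \<Rightarrow> ('p,'b) mcat \<Rightarrow> ('p \<Rightarrow> 'p \<Rightarrow> 'b) \<Rightarrow> ('p,'b,'o,'a) smf \<Rightarrow> bool" where
  "sym_corefl_univ M SM r e s N t F \<longleftrightarrow> (in_Z N \<and> symmetric_strong_monoidal N t M s F \<longrightarrow>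
     (\<exists>G. symmetric_strong_monoidal N t SM r G \<and> smf_eq N (smf_comp M e G) F) \<and>
     (\<forall>G G'. symmetric_strong_monoidal N t SM r G \<and> smf_eq N (smf_comp M e G) F \<and>
             symmetric_strong_monoidal N t SM r G' \<and> smf_eq N (smf_comp M e G') F
             \<longrightarrow> smf_eq N G G'))"

end

theory Submission
  imports Defs
begin


lemma hom_iff: "f \<in> hom C X Y \<longleftrightarrow> f \<in> mAr C \<and> mDom C f = X \<and> mCod C f = Y"
  by (simp add: hom_def)

context fixes C :: "('o,'a) mcat" assumes cat: "category C"
begin
lemma c_dom[simp]: "f \<in> mAr C \<Longrightarrow> mDom C f \<in> mOb C" using cat unfolding category_def by auto
lemma c_cod[simp]: "f \<in> mAr C \<Longrightarrow> mCod C f \<in> mOb C" using cat unfolding category_def by auto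
lemma c_id_ar[simp]: "X \<in> mOb C \<Longrightarrow> mId C X \<in> mAr C" using cat unfolding category_def hom_def by auto
lemma c_id_dom[simp]: "X \<in> mOb C \<Longrightarrow> mDom C (mId C X) = X" using cat unfolding category_def hom_def by auto
lemma c_id_cod[simp]: "X \<in> mOb C \<Longrightarrow> mCod C (mId C X) = X" using cat unfolding category_def hom_def by auto
lemma c_comp_ar[simp]: "f \<in> mAr C \<Longrightarrow> g \<in> mAr C \<Longrightarrow> mCod C f = mDom C g \<Longrightarrow> mComp C g f \<in> mAr C"
  using cat unfolding category_def hom_def by auto
lemma c_comp_dom[simp]: "f \<in> mAr C \<Longrightarrow> g \<in> mAr C \<Longrightarrow> mCod C f = mDom C g \<Longrightarrow> mDom C (mComp C g f) = mDom C f"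
  using cat unfolding category_def hom_def by auto
lemma c_comp_cod[simp]: "f \<in> mAr C \<Longrightarrow> g \<in> mAr C \<Longrightarrow> mCod C f = mDom C g \<Longrightarrow> mCod C (mComp C g f) = mCod C g"
  using cat unfolding category_def hom_def by auto
lemma c_idl[simp]: "f \<in> mAr C \<Longrightarrow> mCod C f = Y \<Longrightarrow> mComp C (mId C Y) f = f"
  using cat unfolding category_def by auto
lemma c_idr[simp]: "f \<in> mAr C \<Longrightarrow> mDom C f = Y \<Longrightarrow> mComp C f (mId C Y) = f"
  using cat unfolding category_def by auto
lemma c_assoc: "f \<in> mAr C \<Longrightarrow> g \<in> mAr C \<Longrightarrow> h \<in> mAr C \<Longrightarrow> mCod C f = mDom C g \<Longrightarrow> mCod C g = mDom C h \<Longrightarrow>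
   mComp C h (mComp C g f) = mComp C (mComp C h g) f"
  using cat unfolding category_def by auto
end

definition uhom :: "('o,'a) mcat \<Rightarrow> bool" where
  "uhom C \<longleftrightarrow> (\<forall>X\<in>mOb C. \<forall>Y\<in>mOb C. \<exists>!f. f \<in> hom C X Y)"

lemma in_Z_iff: "in_Z C \<longleftrightarrow> monoidal C \<and> uhom C" by (simp add: in_Z_def uhom_def)

lemma ueq: assumes "category C" "uhom C" "p \<in> mAr C" "q \<in> mAr C" "mDom C p = mDom C q" "mCod C p = mCod C q"
  shows "p = q"
proof -
  have "mDom C p \<in> mOb C" "mCod C p \<in> mOb C" using assms by auto
  then have "\<exists>!f. f \<in> hom C (mDom C p) (mCod C p)" using assms(2) unfolding uhom_def by blast
  moreover have "p \<in> hom C (mDom C p) (mCod C p)" "q \<in> hom C (mDom C p) (mCod C p)"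
    using assms by (auto simp: hom_def)
  ultimately show ?thesis by blast
qed

lemma uex: assumes "uhom C" "X \<in> mOb C" "Y \<in> mOb C" obtains f where "f \<in> mAr C" "mDom C f = X" "mCod C f = Y"
  using assms unfolding uhom_def hom_def by blast

lemma uiso: assumes "category C" "uhom C" "f \<in> mAr C" shows "iso C f"
proof -
  obtain g where g: "g \<in> mAr C" "mDom C g = mCod C f" "mCod C g = mDom C f"
    using uex[OF assms(2)] assms by (metis c_cod c_dom)
  have "mComp C g f = mId C (mDom C f)" by (rule ueq[OF assms(1,2)]) (use assms g in auto)
  moreover have "mComp C f g = mId C (mCod C f)" by (rule ueq[OF assms(1,2)]) (use assms g in auto)
  ultimately show ?thesis unfolding iso_def hom_def using g assms by auto
qed

lemma mon_cat: "monoidal C \<Longrightarrow> category C" by (simp add: monoidal_def)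

context fixes C :: "('o,'a) mcat" assumes mon: "monoidal C"
begin
lemma m_cat: "category C" using mon by (simp add: monoidal_def)
lemma m_unit[simp]: "mUnit C \<in> mOb C" using mon by (simp add: monoidal_def)
lemma m_ten[simp]: "X \<in> mOb C \<Longrightarrow> Y \<in> mOb C \<Longrightarrow> mTen C X Y \<in> mOb C" using mon by (simp add: monoidal_def)
lemma m_tenA_ar[simp]: "f \<in> mAr C \<Longrightarrow> g \<in> mAr C \<Longrightarrow> mTenA C f g \<in> mAr C" using mon by (simp add: monoidal_def hom_def)
lemma m_tenA_dom[simp]: "f \<in> mAr C \<Longrightarrow> g \<in> mAr C \<Longrightarrow> mDom C (mTenA C f g) = mTen C (mDom C f) (mDom C g)" using mon by (simp add: monoidal_def hom_def)
lemma m_tenA_cod[simp]: "f \<in> mAr C \<Longrightarrow> g \<in> mAr C \<Longrightarrow> mCod C (mTenA C f g) = mTen C (mCod C f) (mCod C g)" using mon by (simp add: monoidal_def hom_def)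
lemma m_tenA_id: "X \<in> mOb C \<Longrightarrow> Y \<in> mOb C \<Longrightarrow> mTenA C (mId C X) (mId C Y) = mId C (mTen C X Y)" using mon by (simp add: monoidal_def)
lemma m_tenA_comp: "f \<in> mAr C \<Longrightarrow> f' \<in> mAr C \<Longrightarrow> g \<in> mAr C \<Longrightarrow> g' \<in> mAr C \<Longrightarrow>
         mCod C f = mDom C f' \<Longrightarrow> mCod C g = mDom C g' \<Longrightarrow>
         mTenA C (mComp C f' f) (mComp C g' g) = mComp C (mTenA C f' g') (mTenA C f g)" using mon by (simp add: monoidal_def)
lemma m_a_ar[simp]: "X \<in> mOb C \<Longrightarrow> Y \<in> mOb C \<Longrightarrow> Z \<in> mOb C \<Longrightarrow> mAssoc C X Y Z \<in> mAr C" using mon by (simp add: monoidal_def hom_def)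
lemma m_a_dom[simp]: "X \<in> mOb C \<Longrightarrow> Y \<in> mOb C \<Longrightarrow> Z \<in> mOb C \<Longrightarrow> mDom C (mAssoc C X Y Z) = mTen C (mTen C X Y) Z" using mon by (simp add: monoidal_def hom_def)
lemma m_a_cod[simp]: "X \<in> mOb C \<Longrightarrow> Y \<in> mOb C \<Longrightarrow> Z \<in> mOb C \<Longrightarrow> mCod C (mAssoc C X Y Z) = mTen C X (mTen C Y Z)" using mon by (simp add: monoidal_def hom_def)
lemma m_a_iso: "X \<in> mOb C \<Longrightarrow> Y \<in> mOb C \<Longrightarrow> Z \<in> mOb C \<Longrightarrow> iso C (mAssoc C X Y Z)" using mon by (simp add: monoidal_def)
lemma m_l_ar[simp]: "X \<in> mOb C \<Longrightarrow> mLu C X \<in> mAr C" using mon by (simp add: monoidal_def hom_def)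
lemma m_l_dom[simp]: "X \<in> mOb C \<Longrightarrow> mDom C (mLu C X) = mTen C (mUnit C) X" using mon by (simp add: monoidal_def hom_def)
lemma m_l_cod[simp]: "X \<in> mOb C \<Longrightarrow> mCod C (mLu C X) = X" using mon by (simp add: monoidal_def hom_def)
lemma m_l_iso: "X \<in> mOb C \<Longrightarrow> iso C (mLu C X)" using mon by (simp add: monoidal_def)
lemma m_r_ar[simp]: "X \<in> mOb C \<Longrightarrow> mRu C X \<in> mAr C" using mon by (simp add: monoidal_def hom_def)
lemma m_r_dom[simp]: "X \<in> mOb C \<Longrightarrow> mDom C (mRu C X) = mTen C X (mUnit C)" using mon by (simp add: monoidal_def hom_def)
lemma m_r_cod[simp]: "X \<in> mOb C \<Longrightarrow> mCod C (mRu C X) = X" using mon by (simp add: monoidal_def hom_def)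
lemma m_r_iso: "X \<in> mOb C \<Longrightarrow> iso C (mRu C X)" using mon by (simp add: monoidal_def)
lemma m_a_nat: "f \<in> mAr C \<Longrightarrow> g \<in> mAr C \<Longrightarrow> h \<in> mAr C \<Longrightarrow>
         mComp C (mAssoc C (mCod C f) (mCod C g) (mCod C h)) (mTenA C (mTenA C f g) h) =
         mComp C (mTenA C f (mTenA C g h)) (mAssoc C (mDom C f) (mDom C g) (mDom C h))" using mon by (simp add: monoidal_def)
lemma m_l_nat: "f \<in> mAr C \<Longrightarrow> mComp C (mLu C (mCod C f)) (mTenA C (mId C (mUnit C)) f) =
                 mComp C f (mLu C (mDom C f))" using mon by (simp add: monoidal_def)
lemma m_r_nat: "f \<in> mAr C \<Longrightarrow> mComp C (mRu C (mCod C f)) (mTenA C f (mId C (mUnit C))) =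
                 mComp C f (mRu C (mDom C f))" using mon by (simp add: monoidal_def)
lemma m_pent: "W \<in> mOb C \<Longrightarrow> X \<in> mOb C \<Longrightarrow> Y \<in> mOb C \<Longrightarrow> Z \<in> mOb C \<Longrightarrow>
         mComp C (mAssoc C W X (mTen C Y Z)) (mAssoc C (mTen C W X) Y Z) =
         mComp C (mTenA C (mId C W) (mAssoc C X Y Z))
           (mComp C (mAssoc C W (mTen C X Y) Z) (mTenA C (mAssoc C W X Y) (mId C Z)))" using mon by (simp add: monoidal_def)
lemma m_tri: "X \<in> mOb C \<Longrightarrow> Y \<in> mOb C \<Longrightarrow>
         mComp C (mTenA C (mId C X) (mLu C Y)) (mAssoc C X (mUnit C) Y) =
         mTenA C (mRu C X) (mId C Y)" using mon by (simp add: monoidal_def)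
end

lemma uhom_monoidal:
  assumes cat: "category C" and u: "uhom C" and un: "mUnit C \<in> mOb C"
    and tn: "\<And>X Y. X \<in> mOb C \<Longrightarrow> Y \<in> mOb C \<Longrightarrow> mTen C X Y \<in> mOb C"
    and ta: "\<And>f g. f \<in> mAr C \<Longrightarrow> g \<in> mAr C \<Longrightarrow> mTenA C f g \<in>
         hom C (mTen C (mDom C f) (mDom C g)) (mTen C (mCod C f) (mCod C g))"
    and aa: "\<And>X Y Z. X \<in> mOb C \<Longrightarrow> Y \<in> mOb C \<Longrightarrow> Z \<in> mOb C \<Longrightarrow>
         mAssoc C X Y Z \<in> hom C (mTen C (mTen C X Y) Z) (mTen C X (mTen C Y Z))"
    and la: "\<And>X. X \<in> mOb C \<Longrightarrow> mLu C X \<in> hom C (mTen C (mUnit C) X) X"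
    and ra: "\<And>X. X \<in> mOb C \<Longrightarrow> mRu C X \<in> hom C (mTen C X (mUnit C)) X"
  shows "monoidal C"
proof -
  have ta': "\<And>f g. f \<in> mAr C \<Longrightarrow> g \<in> mAr C \<Longrightarrow> mTenA C f g \<in> mAr C \<and>
      mDom C (mTenA C f g) = mTen C (mDom C f) (mDom C g) \<and> mCod C (mTenA C f g) = mTen C (mCod C f) (mCod C g)"
    using ta by (simp add: hom_def)
  have aa': "\<And>X Y Z. X \<in> mOb C \<Longrightarrow> Y \<in> mOb C \<Longrightarrow> Z \<in> mOb C \<Longrightarrow>
         mAssoc C X Y Z \<in> mAr C \<and> mDom C (mAssoc C X Y Z) = mTen C (mTen C X Y) Z \<and> mCod C (mAssoc C X Y Z) = (mTen C X (mTen C Y Z))"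
    using aa by (simp add: hom_def)
  have la': "\<And>X. X \<in> mOb C \<Longrightarrow> mLu C X \<in> mAr C \<and> mDom C (mLu C X) = mTen C (mUnit C) X \<and> mCod C (mLu C X) = X"
    using la by (simp add: hom_def)
  have ra': "\<And>X. X \<in> mOb C \<Longrightarrow> mRu C X \<in> mAr C \<and> mDom C (mRu C X) = mTen C X (mUnit C) \<and> mCod C (mRu C X) = X"
    using ra by (simp add: hom_def)
  note E = ueq[OF cat u]
  note simps = ta' aa' la' ra' c_dom[OF cat] c_cod[OF cat] c_id_ar[OF cat] c_id_dom[OF cat] c_id_cod[OF cat]
     c_comp_ar[OF cat] c_comp_dom[OF cat] c_comp_cod[OF cat] tn un
  show ?thesis unfolding monoidal_def
    apply (intro conjI ballI impI)
    using cat apply simp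
    using un apply simp
    using tn apply simp
    using ta apply simp
    subgoal by (rule E) (simp_all add: simps)
    subgoal by (rule E) (simp_all add: simps)
    subgoal using aa by simp
    subgoal by (rule uiso[OF cat u]) (simp add: simps)
    subgoal using la by simp
    subgoal by (rule uiso[OF cat u]) (simp add: simps)
    subgoal using ra by simp
    subgoal by (rule uiso[OF cat u]) (simp add: simps)
    subgoal by (rule E) (simp_all add: simps)
    subgoal by (rule E) (simp_all add: simps)
    subgoal by (rule E) (simp_all add: simps)
    subgoal by (rule E) (simp_all add: simps)
    subgoal by (rule E) (simp_all add: simps)
    done
qed

lemma uhom_symmetric:
  assumes mon: "monoidal C" and u: "uhom C"
    and sa: "\<And>X Y. X \<in> mOb C \<Longrightarrow> Y \<in> mOb C \<Longrightarrow> s X Y \<in> hom C (mTen C X Y) (mTen C Y X)"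
  shows "symmetric C s"
proof -
  have cat: "category C" using mon by (rule mon_cat)
  have sa': "\<And>X Y. X \<in> mOb C \<Longrightarrow> Y \<in> mOb C \<Longrightarrow> s X Y \<in> mAr C \<and> mDom C (s X Y) = mTen C X Y \<and> mCod C (s X Y) = mTen C Y X"
    using sa by (simp add: hom_def)
  note E = ueq[OF cat u]
  note simps = sa' c_dom[OF cat] c_cod[OF cat] c_id_ar[OF cat] c_id_dom[OF cat] c_id_cod[OF cat]
     c_comp_ar[OF cat] c_comp_dom[OF cat] c_comp_cod[OF cat] m_ten[OF mon] m_unit[OF mon]
     m_tenA_ar[OF mon] m_tenA_dom[OF mon] m_tenA_cod[OF mon] m_a_ar[OF mon] m_a_dom[OF mon] m_a_cod[OF mon]
  show ?thesis unfolding symmetric_def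
    apply (intro conjI ballI impI)
    using mon apply simp
    using sa apply simp
    subgoal by (rule E) (simp_all add: simps)
    subgoal by (rule E) (simp_all add: simps)
    subgoal by (rule E) (simp_all add: simps)
    done
qed

lemma uhom_strong:
  assumes mC: "monoidal C" and mD: "monoidal D" and u: "uhom D"
    and ob: "\<And>X. X \<in> mOb C \<Longrightarrow> fO F X \<in> mOb D"
    and ar: "\<And>f. f \<in> mAr C \<Longrightarrow> fA F f \<in> hom D (fO F (mDom C f)) (fO F (mCod C f))"
    and p0: "fPhi0 F \<in> hom D (mUnit D) (fO F (mUnit C))"
    and p: "\<And>X Y. X \<in> mOb C \<Longrightarrow> Y \<in> mOb C \<Longrightarrow> fPhi F X Y \<in> hom D (mTen D (fO F X) (fO F Y)) (fO F (mTen C X Y))"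
  shows "strong_monoidal C D F"
proof -
  have cat: "category D" using mD by (rule mon_cat)
  have catC: "category C" using mC by (rule mon_cat)
  have ar': "\<And>f. f \<in> mAr C \<Longrightarrow> fA F f \<in> mAr D \<and> mDom D (fA F f) = fO F (mDom C f) \<and> mCod D (fA F f) = fO F (mCod C f)"
    using ar by (simp add: hom_def)
  have p0': "fPhi0 F \<in> mAr D \<and> mDom D (fPhi0 F) = mUnit D \<and> mCod D (fPhi0 F) = fO F (mUnit C)"
    using p0 by (simp add: hom_def)
  have p': "\<And>X Y. X \<in> mOb C \<Longrightarrow> Y \<in> mOb C \<Longrightarrow> fPhi F X Y \<in> mAr D \<and> mDom D (fPhi F X Y) = mTen D (fO F X) (fO F Y) \<and> mCod D (fPhi F X Y) = fO F (mTen C X Y)"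
    using p by (simp add: hom_def)
  note E = ueq[OF cat u]
  note simps = ar' p0' p' ob c_dom[OF cat] c_cod[OF cat] c_id_ar[OF cat] c_id_dom[OF cat] c_id_cod[OF cat]
     c_comp_ar[OF cat] c_comp_dom[OF cat] c_comp_cod[OF cat] m_ten[OF mD] m_unit[OF mD]
     m_tenA_ar[OF mD] m_tenA_dom[OF mD] m_tenA_cod[OF mD] m_a_ar[OF mD] m_a_dom[OF mD] m_a_cod[OF mD]
     m_l_ar[OF mD] m_l_dom[OF mD] m_l_cod[OF mD] m_r_ar[OF mD] m_r_dom[OF mD] m_r_cod[OF mD]
     c_dom[OF catC] c_cod[OF catC] c_id_ar[OF catC] c_id_dom[OF catC] c_id_cod[OF catC]
     c_comp_ar[OF catC] c_comp_dom[OF catC] c_comp_cod[OF catC] m_ten[OF mC] m_unit[OF mC]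
     m_tenA_ar[OF mC] m_tenA_dom[OF mC] m_tenA_cod[OF mC] m_a_ar[OF mC] m_a_dom[OF mC] m_a_cod[OF mC]
     m_l_ar[OF mC] m_l_dom[OF mC] m_l_cod[OF mC] m_r_ar[OF mC] m_r_dom[OF mC] m_r_cod[OF mC]
  show ?thesis unfolding strong_monoidal_def is_functor_def
    apply (intro conjI ballI impI)
    using mC apply simp
    using mD apply simp
    subgoal by (simp add: ob)
    subgoal by (rule E) (simp_all add: simps)
    subgoal by (rule ar)
    subgoal by (rule E) (simp_all add: simps)
    subgoal by (rule p0)
    subgoal by (rule uiso[OF cat u]) (simp add: simps)
    subgoal by (rule p)
    subgoal by (rule uiso[OF cat u]) (simp add: simps)
    subgoal by (rule E) (simp_all add: simps)
    subgoal by (rule E) (simp_all add: simps)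
    subgoal by (rule E) (simp_all add: simps)
    subgoal by (rule E) (simp_all add: simps)
    done
qed

lemma uhom_symstrong:
  assumes "symmetric C s" "symmetric D t" "strong_monoidal C D F" "uhom D"
  shows "symmetric_strong_monoidal C s D t F"
proof -
  have mC: "monoidal C" and mD: "monoidal D" using assms by (auto simp: symmetric_def)
  have cat: "category D" using mD by (rule mon_cat)
  have catC: "category C" using mC by (rule mon_cat)
  have sa: "\<And>X Y. X \<in> mOb C \<Longrightarrow> Y \<in> mOb C \<Longrightarrow> s X Y \<in> mAr C \<and> mDom C (s X Y) = mTen C X Y \<and> mCod C (s X Y) = mTen C Y X"
    using assms(1) by (simp add: hom_def symmetric_def)
  have ta: "\<And>X Y. X \<in> mOb D \<Longrightarrow> Y \<in> mOb D \<Longrightarrow> t X Y \<in> mAr D \<and> mDom D (t X Y) = mTen D X Y \<and> mCod D (t X Y) = mTen D Y X"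
    using assms(2) by (simp add: hom_def symmetric_def)
  have ob: "\<And>X. X \<in> mOb C \<Longrightarrow> fO F X \<in> mOb D" using assms(3) by (simp add: strong_monoidal_def is_functor_def)
  have ar': "\<And>f. f \<in> mAr C \<Longrightarrow> fA F f \<in> mAr D \<and> mDom D (fA F f) = fO F (mDom C f) \<and> mCod D (fA F f) = fO F (mCod C f)"
    using assms(3) by (simp add: hom_def strong_monoidal_def is_functor_def)
  have p': "\<And>X Y. X \<in> mOb C \<Longrightarrow> Y \<in> mOb C \<Longrightarrow> fPhi F X Y \<in> mAr D \<and> mDom D (fPhi F X Y) = mTen D (fO F X) (fO F Y) \<and> mCod D (fPhi F X Y) = fO F (mTen C X Y)"
    using assms(3) by (simp add: hom_def strong_monoidal_def)
  show ?thesis unfolding symmetric_strong_monoidal_def using assms(1-3)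
    apply (intro conjI ballI; simp?)
    by (rule ueq[OF cat assms(4)]) (simp_all add: sa ta ob ar' p' cat catC mC mD)
qed


definition inv_ar :: "('o,'a) mcat \<Rightarrow> 'a \<Rightarrow> 'a" where
  "inv_ar C f = (SOME g. g \<in> hom C (mCod C f) (mDom C f) \<and>
        mComp C g f = mId C (mDom C f) \<and> mComp C f g = mId C (mCod C f))"

locale moncat =
  fixes C :: "('o,'a) mcat" assumes mon: "monoidal C"
begin

lemma cat: "category C" using mon by (rule mon_cat)

lemmas ms[simp] = c_dom[OF cat] c_cod[OF cat] c_id_ar[OF cat] c_id_dom[OF cat] c_id_cod[OF cat]
     c_comp_ar[OF cat] c_comp_dom[OF cat] c_comp_cod[OF cat] c_idl[OF cat] c_idr[OF cat]
     m_ten[OF mon] m_unit[OF mon]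
     m_tenA_ar[OF mon] m_tenA_dom[OF mon] m_tenA_cod[OF mon] m_a_ar[OF mon] m_a_dom[OF mon] m_a_cod[OF mon]
     m_l_ar[OF mon] m_l_dom[OF mon] m_l_cod[OF mon] m_r_ar[OF mon] m_r_dom[OF mon] m_r_cod[OF mon]

lemmas assoc = c_assoc[OF cat]
lemmas tenA_comp = m_tenA_comp[OF mon]
lemmas tenA_id = m_tenA_id[OF mon]
lemmas a_nat = m_a_nat[OF mon]
lemmas l_nat = m_l_nat[OF mon]
lemmas r_nat = m_r_nat[OF mon]
lemmas pent = m_pent[OF mon]
lemmas tri = m_tri[OF mon]

abbreviation cp (infixr "\<cdot>" 55) where "g \<cdot> f \<equiv> mComp C g f"
abbreviation tA (infixr "\<odot>" 60) where "f \<odot> g \<equiv> mTenA C f g"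
abbreviation tn where "tn X Y \<equiv> mTen C X Y"
abbreviation I where "I \<equiv> mUnit C"
abbreviation ii where "ii X \<equiv> mId C X"
abbreviation Ar where "Ar \<equiv> mAr C"
abbreviation Ob where "Ob \<equiv> mOb C"
abbreviation dm where "dm f \<equiv> mDom C f"
abbreviation cd where "cd f \<equiv> mCod C f"
abbreviation a where "a \<equiv> mAssoc C"
abbreviation lu where "lu \<equiv> mLu C"
abbreviation ru where "ru \<equiv> mRu C"
abbreviation iv where "iv f \<equiv> inv_ar C f"

lemma inv_props: assumes "iso C f"
  shows "iv f \<in> Ar" "dm (iv f) = cd f" "cd (iv f) = dm f" "iv f \<cdot> f = ii (dm f)" "f \<cdot> iv f = ii (cd f)"
proof -
  have "\<exists>g. g \<in> hom C (cd f) (dm f) \<and> g \<cdot> f = ii (dm f) \<and> f \<cdot> g = ii (cd f)"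
    using assms unfolding iso_def by blast
  then have "iv f \<in> hom C (cd f) (dm f) \<and> iv f \<cdot> f = ii (dm f) \<and> f \<cdot> iv f = ii (cd f)"
    unfolding inv_ar_def by (rule someI_ex)
  then show "iv f \<in> Ar" "dm (iv f) = cd f" "cd (iv f) = dm f" "iv f \<cdot> f = ii (dm f)" "f \<cdot> iv f = ii (cd f)"
    by (auto simp: hom_def)
qed

lemma iso_ar: "iso C f \<Longrightarrow> f \<in> Ar" by (simp add: iso_def)

lemma assocR: "f \<in> Ar \<Longrightarrow> g \<in> Ar \<Longrightarrow> h \<in> Ar \<Longrightarrow> cd f = dm g \<Longrightarrow> cd g = dm h \<Longrightarrow>
   (h \<cdot> g) \<cdot> f = h \<cdot> (g \<cdot> f)"
  by (simp add: assoc)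

lemma cancel1: assumes "iso C h" "f \<in> Ar" "cd f = dm h" shows "iv h \<cdot> (h \<cdot> f) = f"
proof -
  note ip = inv_props[OF assms(1)]
  have h: "h \<in> Ar" using assms(1) by (rule iso_ar)
  have "iv h \<cdot> (h \<cdot> f) = (iv h \<cdot> h) \<cdot> f" using ip assms h by (simp add: assoc)
  also have "\<dots> = f" using ip assms by simp
  finally show ?thesis .
qed

lemma cancel2: assumes "iso C h" "f \<in> Ar" "cd f = cd h" shows "h \<cdot> (iv h \<cdot> f) = f"
proof -
  note ip = inv_props[OF assms(1)]
  have h: "h \<in> Ar" using assms(1) by (rule iso_ar)
  have "h \<cdot> (iv h \<cdot> f) = (h \<cdot> iv h) \<cdot> f" using ip assms h by (simp add: assoc)
  also have "\<dots> = f" using ip assms by simp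
  finally show ?thesis .
qed

lemma cancel3: assumes "iso C h" "f \<in> Ar" "dm f = cd h" shows "(f \<cdot> h) \<cdot> iv h = f"
proof -
  note ip = inv_props[OF assms(1)]
  have h: "h \<in> Ar" using assms(1) by (rule iso_ar)
  have "(f \<cdot> h) \<cdot> iv h = f \<cdot> (h \<cdot> iv h)" using ip assms h by (simp add: assocR)
  also have "\<dots> = f" using ip assms by simp
  finally show ?thesis .
qed

lemma mono: assumes "iso C h" "f \<in> Ar" "g \<in> Ar" "cd f = dm h" "cd g = dm h" "h \<cdot> f = h \<cdot> g"
  shows "f = g"
  by (metis assms cancel1)

lemma epi: assumes "iso C h" "f \<in> Ar" "g \<in> Ar" "dm f = cd h" "dm g = cd h" "f \<cdot> h = g \<cdot> h"
  shows "f = g"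
  by (metis assms cancel3)

lemma iso_intro: "f \<in> Ar \<Longrightarrow> g \<in> Ar \<Longrightarrow> dm g = cd f \<Longrightarrow> cd g = dm f \<Longrightarrow> g \<cdot> f = ii (dm f) \<Longrightarrow> f \<cdot> g = ii (cd f) \<Longrightarrow> iso C f"
  unfolding iso_def hom_def by auto

lemma iso_inv: "iso C f \<Longrightarrow> iso C (iv f)"
  by (rule iso_intro[where g=f]) (auto simp: inv_props iso_ar)

lemma iso_comp: assumes "iso C f" "iso C g" "cd f = dm g" shows "iso C (g \<cdot> f)"
proof -
  note f = inv_props[OF assms(1)] iso_ar[OF assms(1)]
  note g = inv_props[OF assms(2)] iso_ar[OF assms(2)]
  have 1: "(iv f \<cdot> iv g) \<cdot> (g \<cdot> f) = ii (dm f)" using f g assms by (simp add: assocR cancel1)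
  have 2: "(g \<cdot> f) \<cdot> (iv f \<cdot> iv g) = ii (cd g)" using f g assms by (simp add: assocR cancel2)
  show ?thesis
    apply (rule iso_intro[where g="iv f \<cdot> iv g"])
    using f(1-3,6) g(1-3,6) assms(3) apply simp_all
    using 1 2 f(1-3,6) g(1-3,6) assms(3) by simp_all
qed

lemma iso_tenA: assumes "iso C f" "iso C g" shows "iso C (f \<odot> g)"
proof -
  note f = inv_props[OF assms(1)] iso_ar[OF assms(1)]
  note g = inv_props[OF assms(2)] iso_ar[OF assms(2)]
  have 1: "(iv f \<odot> iv g) \<cdot> (f \<odot> g) = ii (dm (f \<odot> g))"
    using f g by (simp add: tenA_comp[symmetric] tenA_id)
  have 2: "(f \<odot> g) \<cdot> (iv f \<odot> iv g) = ii (cd (f \<odot> g))"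
    using f g by (simp add: tenA_comp[symmetric] tenA_id)
  show ?thesis
    apply (rule iso_intro[where g="iv f \<odot> iv g"])
    using f(1-3,6) g(1-3,6) apply simp_all
    using 1 2 by simp_all
qed

lemma iso_id: "X \<in> Ob \<Longrightarrow> iso C (ii X)"
  by (rule iso_intro[where g="ii X"]) auto

lemmas a_iso = m_a_iso[OF mon]
lemmas l_iso = m_l_iso[OF mon]
lemmas r_iso = m_r_iso[OF mon]

lemma cancel_l: assumes "f \<in> Ar" "g \<in> Ar" "dm f = dm g" "cd f = cd g" "ii I \<odot> f = ii I \<odot> g"
  shows "f = g"
proof -
  have "f \<cdot> lu (dm f) = lu (cd f) \<cdot> (ii I \<odot> f)" using l_nat[OF assms(1)] by simp
  also have "\<dots> = lu (cd g) \<cdot> (ii I \<odot> g)" using assms by simp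
  also have "\<dots> = g \<cdot> lu (dm g)" using l_nat[OF assms(2)] by simp
  finally have e: "f \<cdot> lu (dm f) = g \<cdot> lu (dm f)" using assms(3) by simp
  have X: "dm f \<in> Ob" using assms(1) by simp
  show ?thesis
    apply (rule epi[OF l_iso[OF X] assms(1,2)])
    using X assms(3) e by simp_all
qed

lemma cancel_r: assumes "f \<in> Ar" "g \<in> Ar" "dm f = dm g" "cd f = cd g" "f \<odot> ii I = g \<odot> ii I"
  shows "f = g"
proof -
  have "f \<cdot> ru (dm f) = ru (cd f) \<cdot> (f \<odot> ii I)" using r_nat[OF assms(1)] by simp
  also have "\<dots> = ru (cd g) \<cdot> (g \<odot> ii I)" using assms by simp
  also have "\<dots> = g \<cdot> ru (dm g)" using r_nat[OF assms(2)] by simp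
  finally have e: "f \<cdot> ru (dm f) = g \<cdot> ru (dm f)" using assms(3) by simp
  have X: "dm f \<in> Ob" using assms(1) by simp
  show ?thesis
    apply (rule epi[OF r_iso[OF X] assms(1,2)])
    using X assms(3) e by simp_all
qed


lemma iso_ar'[simp]: "iso C f \<Longrightarrow> f \<in> Ar" by (rule iso_ar)

lemma kelly: assumes X: "X \<in> Ob" and Y: "Y \<in> Ob"
  shows "lu X \<odot> ii Y = lu (tn X Y) \<cdot> a I X Y"
proof -
  define P where "P = a I (tn I X) Y \<cdot> (a I I X \<odot> ii Y)"
  have P: "iso C P" unfolding P_def
    by (rule iso_comp) (simp_all add: X Y a_iso iso_tenA iso_id)
  have PA: "P \<in> Ar" "dm P = tn (tn (tn I I) X) Y" "cd P = tn I (tn (tn I X) Y)" using X Y by (simp_all add: P_def)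
  let ?L = "ii I \<odot> lu (tn X Y)"
  have "?L \<cdot> (a I I (tn X Y) \<cdot> a (tn I I) X Y) = (?L \<cdot> a I I (tn X Y)) \<cdot> a (tn I I) X Y"
    using X Y by (simp add: assoc)
  also have "\<dots> = (ru I \<odot> ii (tn X Y)) \<cdot> a (tn I I) X Y" using X Y by (simp add: tri)
  also have "\<dots> = (ru I \<odot> (ii X \<odot> ii Y)) \<cdot> a (tn I I) X Y" using X Y by (simp add: tenA_id)
  also have "\<dots> = a I X Y \<cdot> ((ru I \<odot> ii X) \<odot> ii Y)" using X Y a_nat[of "ru I" "ii X" "ii Y"] by simp
  also have "\<dots> = a I X Y \<cdot> (((ii I \<odot> lu X) \<cdot> a I I X) \<odot> ii Y)" using X Y by (simp add: tri)
  also have "\<dots> = a I X Y \<cdot> (((ii I \<odot> lu X) \<odot> ii Y) \<cdot> (a I I X \<odot> ii Y))"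
    using X Y tenA_comp[of "a I I X" "ii I \<odot> lu X" "ii Y" "ii Y"] by simp
  also have "\<dots> = (a I X Y \<cdot> ((ii I \<odot> lu X) \<odot> ii Y)) \<cdot> (a I I X \<odot> ii Y)"
    using X Y by (simp add: assoc)
  also have "\<dots> = ((ii I \<odot> (lu X \<odot> ii Y)) \<cdot> a I (tn I X) Y) \<cdot> (a I I X \<odot> ii Y)"
    using X Y a_nat[of "ii I" "lu X" "ii Y"] by simp
  also have "\<dots> = (ii I \<odot> (lu X \<odot> ii Y)) \<cdot> P"
    using X Y by (simp add: assoc P_def)
  finally have e1: "?L \<cdot> (a I I (tn X Y) \<cdot> a (tn I I) X Y) = (ii I \<odot> (lu X \<odot> ii Y)) \<cdot> P" .
  have "?L \<cdot> (a I I (tn X Y) \<cdot> a (tn I I) X Y) = ?L \<cdot> ((ii I \<odot> a I X Y) \<cdot> P)"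
    using X Y by (simp add: pent P_def)
  also have "\<dots> = (?L \<cdot> (ii I \<odot> a I X Y)) \<cdot> P"
    using X Y PA by (simp add: assoc)
  also have "\<dots> = (ii I \<odot> (lu (tn X Y) \<cdot> a I X Y)) \<cdot> P"
    using X Y tenA_comp[of "ii I" "ii I" "a I X Y" "lu (tn X Y)"] by simp
  finally have e2: "?L \<cdot> (a I I (tn X Y) \<cdot> a (tn I I) X Y) = (ii I \<odot> (lu (tn X Y) \<cdot> a I X Y)) \<cdot> P" .
  have "ii I \<odot> (lu X \<odot> ii Y) = ii I \<odot> (lu (tn X Y) \<cdot> a I X Y)"
    apply (rule epi[OF P]) using X Y PA e1 e2 by simp_all
  then show ?thesis
    by (rule cancel_l[rotated 4]) (use X Y in simp_all)
qed

lemma lu_II: "lu (tn I I) = ii I \<odot> lu I"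
proof -
  have "lu I \<cdot> (ii I \<odot> lu I) = lu I \<cdot> lu (tn I I)" using l_nat[of "lu I"] by simp
  then have "ii I \<odot> lu I = lu (tn I I)" by (rule mono[where h="lu I", rotated 5]) (simp_all add: l_iso)
  then show ?thesis by simp
qed

lemma lu_ru_I: "lu I = ru I"
proof -
  have "lu I \<odot> ii I = lu (tn I I) \<cdot> a I I I" by (rule kelly) simp_all
  also have "\<dots> = (ii I \<odot> lu I) \<cdot> a I I I" by (simp add: lu_II)
  also have "\<dots> = ru I \<odot> ii I" by (simp add: tri)
  finally show ?thesis by (rule cancel_r[rotated 4]) simp_all
qed



end


locale symcat = moncat +
  fixes s
  assumes sym: "symmetric C s"
begin

lemma s_ar[simp]: "X \<in> Ob \<Longrightarrow> Y \<in> Ob \<Longrightarrow> s X Y \<in> Ar" using sym by (simp add: symmetric_def hom_def)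
lemma s_dom[simp]: "X \<in> Ob \<Longrightarrow> Y \<in> Ob \<Longrightarrow> dm (s X Y) = tn X Y" using sym by (simp add: symmetric_def hom_def)
lemma s_cod[simp]: "X \<in> Ob \<Longrightarrow> Y \<in> Ob \<Longrightarrow> cd (s X Y) = tn Y X" using sym by (simp add: symmetric_def hom_def)
lemma s_nat: "f \<in> Ar \<Longrightarrow> g \<in> Ar \<Longrightarrow> s (cd f) (cd g) \<cdot> (f \<odot> g) = (g \<odot> f) \<cdot> s (dm f) (dm g)"
  using sym by (simp add: symmetric_def)
lemma s_inv: "X \<in> Ob \<Longrightarrow> Y \<in> Ob \<Longrightarrow> s Y X \<cdot> s X Y = ii (tn X Y)" using sym by (simp add: symmetric_def)
lemma hex: "X \<in> Ob \<Longrightarrow> Y \<in> Ob \<Longrightarrow> Z \<in> Ob \<Longrightarrow>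
         a Y Z X \<cdot> (s X (tn Y Z) \<cdot> a X Y Z) = (ii Y \<odot> s X Z) \<cdot> (a Y X Z \<cdot> (s X Y \<odot> ii Z))"
  using sym by (simp add: symmetric_def)

lemma s_iso: "X \<in> Ob \<Longrightarrow> Y \<in> Ob \<Longrightarrow> iso C (s X Y)"
  by (rule iso_intro[where g="s Y X"]) (simp_all add: s_inv)

lemma lu_sII: "lu I \<cdot> s I I = lu I"
proof -
  have K: "lu (tn I I) \<cdot> a I I I = lu I \<odot> ii I" by (rule kelly[symmetric]) simp_all
  have "lu (tn I I) \<cdot> (a I I I \<cdot> (s I (tn I I) \<cdot> a I I I)) = (lu (tn I I) \<cdot> a I I I) \<cdot> (s I (tn I I) \<cdot> a I I I)"
    by (simp add: assoc)
  also have "\<dots> = ((lu I \<odot> ii I) \<cdot> s I (tn I I)) \<cdot> a I I I" by (simp add: K assoc)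
  also have "\<dots> = (s I I \<cdot> (ii I \<odot> lu I)) \<cdot> a I I I" using s_nat[of "ii I" "lu I"] by simp
  also have "\<dots> = s I I \<cdot> ((ii I \<odot> lu I) \<cdot> a I I I)" by (simp add: assoc)
  also have "\<dots> = s I I \<cdot> (ru I \<odot> ii I)" by (simp add: tri)
  finally have L: "lu (tn I I) \<cdot> (a I I I \<cdot> (s I (tn I I) \<cdot> a I I I)) = s I I \<cdot> (ru I \<odot> ii I)" .
  have "lu (tn I I) \<cdot> ((ii I \<odot> s I I) \<cdot> (a I I I \<cdot> (s I I \<odot> ii I))) = (lu (tn I I) \<cdot> (ii I \<odot> s I I)) \<cdot> (a I I I \<cdot> (s I I \<odot> ii I))"
    by (simp add: assoc)
  also have "\<dots> = (s I I \<cdot> lu (tn I I)) \<cdot> (a I I I \<cdot> (s I I \<odot> ii I))" using l_nat[of "s I I"] by simp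
  also have "\<dots> = s I I \<cdot> ((lu (tn I I) \<cdot> a I I I) \<cdot> (s I I \<odot> ii I))" by (simp add: assoc)
  also have "\<dots> = s I I \<cdot> ((lu I \<odot> ii I) \<cdot> (s I I \<odot> ii I))" by (simp add: K)
  also have "\<dots> = s I I \<cdot> ((lu I \<cdot> s I I) \<odot> ii I)" using tenA_comp[of "s I I" "lu I" "ii I" "ii I"] by simp
  finally have R: "lu (tn I I) \<cdot> ((ii I \<odot> s I I) \<cdot> (a I I I \<cdot> (s I I \<odot> ii I))) = s I I \<cdot> ((lu I \<cdot> s I I) \<odot> ii I)" .
  have "s I I \<cdot> (ru I \<odot> ii I) = s I I \<cdot> ((lu I \<cdot> s I I) \<odot> ii I)"
    using L R hex[of I I I] by simp
  then have "ru I \<odot> ii I = (lu I \<cdot> s I I) \<odot> ii I"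
    by (rule mono[where h="s I I", rotated 5]) (simp_all add: s_iso)
  then have "ru I = lu I \<cdot> s I I" by (rule cancel_r[rotated 4]) simp_all
  then show ?thesis using lu_ru_I by simp
qed

end


section \<open>R(M)\<close>

lemma R_simps[simp]: "mOb (R M) = mOb M" "mAr (R M) = mOb M \<times> mOb M" "mDom (R M) = fst" "mCod (R M) = snd"
  "mId (R M) X = (X, X)" "mComp (R M) g f = (fst f, snd g)" "mTen (R M) = mTen M"
  "mTenA (R M) f g = (mTen M (fst f) (fst g), mTen M (snd f) (snd g))" "mUnit (R M) = mUnit M"
  "mAssoc (R M) X Y Z = (mTen M (mTen M X Y) Z, mTen M X (mTen M Y Z))"
  "mLu (R M) X = (mTen M (mUnit M) X, X)" "mRu (R M) X = (mTen M X (mUnit M), X)"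
  by (simp_all add: R_def)

lemma R_cat: "category (R M)" unfolding category_def hom_def by auto

lemma R_uhom: "uhom (R M)" unfolding uhom_def hom_def by auto

lemma R_mon: assumes "monoidal M" shows "monoidal (R M)"
  by (rule uhom_monoidal[OF R_cat R_uhom]) (use assms in \<open>auto simp: hom_def\<close>)

lemma R_inZ: "monoidal M \<Longrightarrow> in_Z (R M)" by (simp add: in_Z_iff R_mon R_uhom)

lemma R_sym: "monoidal M \<Longrightarrow> symmetric (R M) (Rsym M)"
  by (rule uhom_symmetric[OF R_mon R_uhom]) (auto simp: hom_def Rsym_def)

lemma eta_strong: assumes "monoidal M" shows "strong_monoidal M (R M) (eta M)"
  by (rule uhom_strong[OF assms R_mon[OF assms] R_uhom]) (use assms c_dom[OF mon_cat[OF assms]] c_cod[OF mon_cat[OF assms]] in \<open>auto simp: hom_def eta_def\<close>)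

lemma eta_symstrong: assumes "symmetric M s" shows "symmetric_strong_monoidal M s (R M) (Rsym M) (eta M)"
proof -
  have m: "monoidal M" using assms by (simp add: symmetric_def)
  show ?thesis by (rule uhom_symstrong[OF assms R_sym[OF m] eta_strong[OF m] R_uhom])
qed






lemma comp_hom: "category C \<Longrightarrow> f \<in> hom C X Y \<Longrightarrow> g \<in> hom C Y Z \<Longrightarrow> mComp C g f \<in> hom C X Z"
  unfolding category_def hom_def by auto

lemma uhom_hom_eq: "category C \<Longrightarrow> uhom C \<Longrightarrow> p \<in> hom C X Y \<Longrightarrow> q \<in> hom C X Y \<Longrightarrow> p = q"
  by (rule ueq) (auto simp: hom_def)

lemma uhom_the: "uhom C \<Longrightarrow> X \<in> mOb C \<Longrightarrow> Y \<in> mOb C \<Longrightarrow> (THE f. f \<in> hom C X Y) \<in> hom C X Y"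
  unfolding uhom_def by (metis theI')

lemma sm_facts: assumes "strong_monoidal C D F"
  shows "monoidal C" "monoidal D" "\<And>X. X \<in> mOb C \<Longrightarrow> fO F X \<in> mOb D"
    "\<And>f. f \<in> mAr C \<Longrightarrow> fA F f \<in> hom D (fO F (mDom C f)) (fO F (mCod C f))"
    "fPhi0 F \<in> hom D (mUnit D) (fO F (mUnit C))"
    "\<And>X Y. X \<in> mOb C \<Longrightarrow> Y \<in> mOb C \<Longrightarrow> fPhi F X Y \<in> hom D (mTen D (fO F X) (fO F Y)) (fO F (mTen C X Y))"
  using assms unfolding strong_monoidal_def is_functor_def by auto


lemma sm_more: assumes "strong_monoidal C D F"
  shows "\<And>X. X \<in> mOb C \<Longrightarrow> fA F (mId C X) = mId D (fO F X)"
    "\<And>f g. f \<in> mAr C \<Longrightarrow> g \<in> mAr C \<Longrightarrow> mCod C f = mDom C g \<Longrightarrow> fA F (mComp C g f) = mComp D (fA F g) (fA F f)"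
    "iso D (fPhi0 F)"
    "\<And>f g. f \<in> mAr C \<Longrightarrow> g \<in> mAr C \<Longrightarrow>
         mComp D (fPhi F (mCod C f) (mCod C g)) (mTenA D (fA F f) (fA F g)) =
         mComp D (fA F (mTenA C f g)) (fPhi F (mDom C f) (mDom C g))"
    "\<And>X. X \<in> mOb C \<Longrightarrow> mLu D (fO F X) =
         mComp D (fA F (mLu C X)) (mComp D (fPhi F (mUnit C) X) (mTenA D (fPhi0 F) (mId D (fO F X))))"
  using assms unfolding strong_monoidal_def is_functor_def by auto

lemma sm_iso: assumes sF: "strong_monoidal C D F" and f: "iso C f" shows "iso D (fA F f)"
proof -
  have cC: "category C" using mon_cat[OF sm_facts(1)[OF sF]] .
  note F = sm_facts[OF sF] and F' = sm_more[OF sF]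
  obtain g where g: "g \<in> hom C (mCod C f) (mDom C f)" "mComp C g f = mId C (mDom C f)" "mComp C f g = mId C (mCod C f)"
    using f unfolding iso_def by blast
  have fa: "f \<in> mAr C" using f by (simp add: iso_def)
  have ga: "g \<in> mAr C" "mDom C g = mCod C f" "mCod C g = mDom C f" using g by (auto simp: hom_def)
  have d: "mDom C f \<in> mOb C" "mCod C f \<in> mOb C" using fa cC by (simp_all add: c_dom c_cod)
  have "mComp D (fA F g) (fA F f) = fA F (mComp C g f)" by (rule F'(2)[OF fa ga(1), symmetric]) (simp add: ga)
  also have "\<dots> = mId D (fO F (mDom C f))" using g(2) F'(1)[OF d(1)] by simp
  finally have 1: "mComp D (fA F g) (fA F f) = mId D (fO F (mDom C f))" .
  have "mComp D (fA F f) (fA F g) = fA F (mComp C f g)" by (rule F'(2)[OF ga(1) fa, symmetric]) (simp add: ga)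
  also have "\<dots> = mId D (fO F (mCod C f))" using g(3) F'(1)[OF d(2)] by simp
  finally have 2: "mComp D (fA F f) (fA F g) = mId D (fO F (mCod C f))" .
  note 1 2
  moreover have "fA F g \<in> hom D (fO F (mCod C f)) (fO F (mDom C f))" using F(4)[OF ga(1)] ga by simp
  moreover have "fA F f \<in> hom D (fO F (mDom C f)) (fO F (mCod C f))" using F(4)[OF fa] .
  ultimately have gh: "fA F g \<in> hom D (fO F (mCod C f)) (fO F (mDom C f))"
    and e1: "mComp D (fA F g) (fA F f) = mId D (fO F (mDom C f))"
    and e2: "mComp D (fA F f) (fA F g) = mId D (fO F (mCod C f))"
    and fh: "fA F f \<in> hom D (fO F (mDom C f)) (fO F (mCod C f))" by blast+
  have h: "fA F f \<in> mAr D" "mDom D (fA F f) = fO F (mDom C f)" "mCod D (fA F f) = fO F (mCod C f)"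
    using fh by (simp_all add: hom_def)
  show ?thesis unfolding iso_def h(2,3) using h(1) gh e1 e2 by blast
qed

lemma refl_univ_R:
  fixes M :: "('o,'a) mcat" and N :: "('p,'b) mcat" and F :: "('o,'a,'p,'b) smf"
  assumes mM: "monoidal M" shows "refl_univ M (R M) (eta M) N F"
  unfolding refl_univ_def
proof (intro impI, elim conjE)
  assume zN: "in_Z N" and sF: "strong_monoidal M N F"
  have mN: "monoidal N" and uN: "uhom N" using zN by (auto simp: in_Z_iff)
  have catN: "category N" using mN by (rule mon_cat)
  have catM: "category M" using mM by (rule mon_cat)
  note F = sm_facts[OF sF]
  define G :: "('o, 'o \<times> 'o, 'p, 'b) smf" where
    "G = \<lparr>fO = fO F, fA = (\<lambda>p. THE f. f \<in> hom N (fO F (fst p)) (fO F (snd p))), fPhi = fPhi F, fPhi0 = fPhi0 F\<rparr>"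
  have Gs: "fO G = fO F" "fPhi G = fPhi F" "fPhi0 G = fPhi0 F" by (simp_all add: G_def)
  have GA: "\<And>X Y. X \<in> mOb M \<Longrightarrow> Y \<in> mOb M \<Longrightarrow> fA G (X, Y) \<in> hom N (fO F X) (fO F Y)"
    unfolding G_def using uhom_the[OF uN] F(3) by simp
  have sG: "strong_monoidal (R M) N G"
    by (rule uhom_strong[OF R_mon[OF mM] mN uN]) (auto simp: G_def F intro!: uhom_the[OF uN] F(3))
  show "(\<exists>G. strong_monoidal (R M) N G \<and> smf_eq M (smf_comp N G (eta M)) F) \<and> (\<forall>G G'. strong_monoidal (R M) N G \<and> smf_eq M (smf_comp N G (eta M)) F \<and>
             strong_monoidal (R M) N G' \<and> smf_eq M (smf_comp N G' (eta M)) F \<longrightarrow> smf_eq (R M) G G')"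
  proof (intro conjI allI impI)
  show "\<exists>G. strong_monoidal (R M) N G \<and> smf_eq M (smf_comp N G (eta M)) F"
    proof (rule exI[where x=G], intro conjI)
      show "strong_monoidal (R M) N G" by (rule sG)
      show "smf_eq M (smf_comp N G (eta M)) F"
        unfolding smf_eq_def
      proof (intro conjI ballI)
        fix X assume "X \<in> mOb M" then show "fO (smf_comp N G (eta M)) X = fO F X"
          by (simp add: smf_comp_def G_def eta_def)
      next
        fix f assume f: "f \<in> mAr M"
        then show "fA (smf_comp N G (eta M)) f = fA F f"
          using uhom_hom_eq[OF catN uN GA[of "mDom M f" "mCod M f"] F(4)[OF f]] f catM
          by (simp add: smf_comp_def eta_def)
      next
        fix X Y assume X: "X \<in> mOb M" and Y: "Y \<in> mOb M"
        have 1: "fA G (mTen M X Y, mTen M X Y) \<in> hom N (fO F (mTen M X Y)) (fO F (mTen M X Y))"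
          using GA X Y mM by simp
        have "mComp N (fA G (mTen M X Y, mTen M X Y)) (fPhi F X Y) \<in> hom N (mTen N (fO F X) (fO F Y)) (fO F (mTen M X Y))"
          by (rule comp_hom[OF catN F(6)[OF X Y] 1])
        then have "mComp N (fA G (mTen M X Y, mTen M X Y)) (fPhi F X Y) = fPhi F X Y"
          by (rule uhom_hom_eq[OF catN uN _ F(6)[OF X Y]])
        then show "fPhi (smf_comp N G (eta M)) X Y = fPhi F X Y"
          by (simp add: smf_comp_def eta_def Gs)
      next
        have 1: "fA G (mUnit M, mUnit M) \<in> hom N (fO F (mUnit M)) (fO F (mUnit M))"
          using GA mM by simp
        have "mComp N (fA G (mUnit M, mUnit M)) (fPhi0 F) \<in> hom N (mUnit N) (fO F (mUnit M))"
          by (rule comp_hom[OF catN F(5) 1])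
        then have "mComp N (fA G (mUnit M, mUnit M)) (fPhi0 F) = fPhi0 F"
          by (rule uhom_hom_eq[OF catN uN _ F(5)])
        then show "fPhi0 (smf_comp N G (eta M)) = fPhi0 F"
          by (simp add: smf_comp_def eta_def Gs)
      qed
    qed
  next
  fix G G' :: "('o, 'o \<times> 'o, 'p, 'b) smf"
  assume H: "strong_monoidal (R M) N G \<and> smf_eq M (smf_comp N G (eta M)) F \<and>
        strong_monoidal (R M) N G' \<and> smf_eq M (smf_comp N G' (eta M)) F"
  note G = sm_facts[of "R M" N G] and G' = sm_facts[of "R M" N G']
  have sG: "strong_monoidal (R M) N G" and sG': "strong_monoidal (R M) N G'" using H by auto
  have oG: "\<And>X. X \<in> mOb M \<Longrightarrow> fO G X = fO F X" using H
    unfolding smf_eq_def smf_comp_def eta_def by simp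
  have oG': "\<And>X. X \<in> mOb M \<Longrightarrow> fO G' X = fO F X" using H
    unfolding smf_eq_def smf_comp_def eta_def by simp
  have oo: "\<And>X. X \<in> mOb M \<Longrightarrow> fO G X = fO G' X" using oG oG' by simp
  show "smf_eq (R M) G G'" unfolding smf_eq_def
  proof (intro conjI ballI)
    fix X assume "X \<in> mOb (R M)" then show "fO G X = fO G' X" using oG oG' by simp
  next
    fix f assume f: "f \<in> mAr (R M)"
    have "fst f \<in> mOb M" "snd f \<in> mOb M" using f by auto
    then show "fA G f = fA G' f"
      using uhom_hom_eq[OF catN uN G(4)[OF sG f]] G'(4)[OF sG' f] oo by simp
  next
    fix X Y assume X: "X \<in> mOb (R M)" and Y: "Y \<in> mOb (R M)"
    show "fPhi G X Y = fPhi G' X Y"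
      using uhom_hom_eq[OF catN uN G(6)[OF sG X Y]] G'(6)[OF sG' X Y] X Y oo m_ten[OF mM] by simp
  next
    show "fPhi0 G = fPhi0 G'"
      using uhom_hom_eq[OF catN uN G(5)[OF sG]] G'(5)[OF sG'] oo m_unit[OF mM] by simp
  qed
  qed
qed


lemma sym_refl_univ_R:
  fixes M :: "('o,'a) mcat" and N :: "('p,'b) mcat" and F :: "('o,'a,'p,'b) smf"
  assumes sM: "symmetric M s" shows "sym_refl_univ M (R M) (Rsym M) (eta M) s N t F"
  unfolding sym_refl_univ_def
proof (intro impI, elim conjE)
  assume zN: "in_Z N" and sF: "symmetric_strong_monoidal M s N t F"
  have mM: "monoidal M" using sM by (simp add: symmetric_def)
  have uN: "uhom N" using zN by (simp add: in_Z_iff)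
  have sF': "strong_monoidal M N F" and tN: "symmetric N t" using sF by (auto simp: symmetric_strong_monoidal_def)
  have RU: "refl_univ M (R M) (eta M) N F" by (rule refl_univ_R[OF mM])
  then obtain G where G: "strong_monoidal (R M) N G" "smf_eq M (smf_comp N G (eta M)) F"
    using zN sF' unfolding refl_univ_def by blast
  have U: "\<And>G G'. strong_monoidal (R M) N G \<Longrightarrow> smf_eq M (smf_comp N G (eta M)) F \<Longrightarrow>
             strong_monoidal (R M) N G' \<Longrightarrow> smf_eq M (smf_comp N G' (eta M)) F \<Longrightarrow> smf_eq (R M) G G'"
    using RU zN sF' unfolding refl_univ_def by blast
  have ss: "\<And>G. symmetric_strong_monoidal (R M) (Rsym M) N t G \<Longrightarrow> strong_monoidal (R M) N G"
    by (simp add: symmetric_strong_monoidal_def)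
  show "(\<exists>G. symmetric_strong_monoidal (R M) (Rsym M) N t G \<and> smf_eq M (smf_comp N G (eta M)) F) \<and>
    (\<forall>G G'. symmetric_strong_monoidal (R M) (Rsym M) N t G \<and> smf_eq M (smf_comp N G (eta M)) F \<and>
             symmetric_strong_monoidal (R M) (Rsym M) N t G' \<and> smf_eq M (smf_comp N G' (eta M)) F
             \<longrightarrow> smf_eq (R M) G G')"
  proof (intro conjI allI impI)
    show "\<exists>G. symmetric_strong_monoidal (R M) (Rsym M) N t G \<and> smf_eq M (smf_comp N G (eta M)) F"
      using uhom_symstrong[OF R_sym[OF mM] tN G(1) uN] G(2) by blast
  next
    fix G G' assume "symmetric_strong_monoidal (R M) (Rsym M) N t G \<and> smf_eq M (smf_comp N G (eta M)) F \<and>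
             symmetric_strong_monoidal (R M) (Rsym M) N t G' \<and> smf_eq M (smf_comp N G' (eta M)) F"
    then show "smf_eq (R M) G G'" using U ss by blast
  qed
qed

section \<open>S(M)\<close>

lemma S_simps[simp]:
  "mOb (S M) = S_ob M"
  "mAr (S M) = {(A, f, B). A \<in> S_ob M \<and> B \<in> S_ob M \<and> f \<in> hom M (fst A) (fst B) \<and> mComp M (snd B) f = snd A}"
  "mDom (S M) = fst" "mCod (S M) = (\<lambda>u. snd (snd u))"
  "mId (S M) A = (A, mId M (fst A), A)"
  "mComp (S M) g f = (fst f, mComp M (fst (snd g)) (fst (snd f)), snd (snd g))"
  "mTen (S M) A B = (mTen M (fst A) (fst B), mComp M (mLu M (mUnit M)) (mTenA M (snd A) (snd B)))"
  "mTenA (S M) f g = (mTen (S M) (fst f) (fst g), mTenA M (fst (snd f)) (fst (snd g)), mTen (S M) (snd (snd f)) (snd (snd g)))"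
  "mUnit (S M) = (mUnit M, mId M (mUnit M))"
  "mAssoc (S M) A B D = (mTen (S M) (mTen (S M) A B) D, mAssoc M (fst A) (fst B) (fst D), mTen (S M) A (mTen (S M) B D))"
  "mLu (S M) A = (mTen (S M) (mUnit M, mId M (mUnit M)) A, mLu M (fst A), A)"
  "mRu (S M) A = (mTen (S M) A (mUnit M, mId M (mUnit M)), mRu M (fst A), A)"
  by (simp_all add: S_def Let_def)

context moncat
begin

lemma S_ob_iff: "(X, x) \<in> S_ob C \<longleftrightarrow> X \<in> Ob \<and> x \<in> Ar \<and> dm x = X \<and> cd x = I \<and> iso C x"
  by (auto simp: S_ob_def hom_def)

lemma S_ob_E: assumes "A \<in> S_ob C"
  shows "fst A \<in> Ob" "snd A \<in> Ar" "dm (snd A) = fst A" "cd (snd A) = I" "iso C (snd A)"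
  using assms by (auto simp: S_ob_def hom_def)

lemma S_ten_ob: assumes A: "A \<in> S_ob C" and B: "B \<in> S_ob C" shows "mTen (S C) A B \<in> S_ob C"
proof -
  note a = S_ob_E[OF A] and b = S_ob_E[OF B]
  have "iso C (lu I \<cdot> (snd A \<odot> snd B))"
    by (rule iso_comp) (use a b in \<open>simp_all add: l_iso iso_tenA\<close>)
  then show ?thesis using a b by (simp add: S_ob_def hom_def)
qed

lemma S_unit_ob: "mUnit (S C) \<in> S_ob C"
  by (simp add: S_ob_def hom_def iso_id)

lemma S_cat: "category (S C)"
  unfolding category_def hom_def
proof (intro conjI ballI impI)
  fix u assume "u \<in> mAr (S C)" then show "mDom (S C) u \<in> mOb (S C)" "mCod (S C) u \<in> mOb (S C)" by auto
next
  fix A assume A: "A \<in> mOb (S C)"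
  note a = S_ob_E[of A]
  show "mId (S C) A \<in> {f \<in> mAr (S C). mDom (S C) f = A \<and> mCod (S C) f = A}"
    using A a by (simp add: hom_def)
next
  fix f g assume f: "f \<in> mAr (S C)" and g: "g \<in> mAr (S C)" and fg: "mCod (S C) f = mDom (S C) g"
  obtain A m B where fe: "f = (A, m, B)" by (cases f) auto
  obtain B' n D where ge: "g = (B', n, D)" by (cases g) auto
  have B': "B' = B" using fg fe ge by simp
  note a = S_ob_E[of A] and b = S_ob_E[of B] and d = S_ob_E[of D]
  have m: "m \<in> Ar" "dm m = fst A" "cd m = fst B" "snd B \<cdot> m = snd A" "A \<in> S_ob C" "B \<in> S_ob C"
    using f fe by (auto simp: hom_def)
  have n: "n \<in> Ar" "dm n = fst B" "cd n = fst D" "snd D \<cdot> n = snd B" "D \<in> S_ob C"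
    using g ge B' by (auto simp: hom_def)
  have "snd D \<cdot> (n \<cdot> m) = (snd D \<cdot> n) \<cdot> m" using m n d by (simp add: assoc)
  also have "\<dots> = snd A" using m n by simp
  finally have e: "snd D \<cdot> (n \<cdot> m) = snd A" .
  show "mComp (S C) g f \<in> {h \<in> mAr (S C). mDom (S C) h = mDom (S C) f \<and> mCod (S C) h = mCod (S C) g}"
    using m n e by (simp add: fe ge hom_def)
next
  fix f assume f: "f \<in> mAr (S C)"
  obtain A m B where fe: "f = (A, m, B)" by (cases f) auto
  have m: "m \<in> Ar" "dm m = fst A" "cd m = fst B"
    using f fe by (auto simp: hom_def)
  show "mComp (S C) f (mId (S C) (mDom (S C) f)) = f" "mComp (S C) (mId (S C) (mCod (S C) f)) f = f"
    using m by (simp_all add: fe)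
next
  fix f g h assume f: "f \<in> mAr (S C)" and g: "g \<in> mAr (S C)" and h: "h \<in> mAr (S C)"
    and fg: "mCod (S C) f = mDom (S C) g" and gh: "mCod (S C) g = mDom (S C) h"
  obtain A m B where fe: "f = (A, m, B)" by (cases f) auto
  obtain B' n D where ge: "g = (B', n, D)" by (cases g) auto
  obtain D' p E where he: "h = (D', p, E)" by (cases h) auto
  have m: "m \<in> Ar" "cd m = fst B" using f fe by (auto simp: hom_def)
  have n: "n \<in> Ar" "dm n = fst B" "cd n = fst D" using g ge fg fe by (auto simp: hom_def)
  have p: "p \<in> Ar" "dm p = fst D" using h he gh ge by (auto simp: hom_def)
  show "mComp (S C) h (mComp (S C) g f) = mComp (S C) (mComp (S C) h g) f"
    using m n p by (simp add: fe ge he assoc)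
qed

lemma S_ar_iff: "(A, m, B) \<in> mAr (S C) \<longleftrightarrow> A \<in> S_ob C \<and> B \<in> S_ob C \<and> m \<in> Ar \<and> dm m = fst A \<and> cd m = fst B \<and> snd B \<cdot> m = snd A"
  by (auto simp: hom_def)

lemma S_uhom: "uhom (S C)"
  unfolding uhom_def
proof (intro ballI)
  fix A B assume A: "A \<in> mOb (S C)" and B: "B \<in> mOb (S C)"
  note a = S_ob_E[of A] and b = S_ob_E[of B]
  have w: "(A, iv (snd B) \<cdot> snd A, B) \<in> hom (S C) A B"
    using A B a b inv_props[of "snd B"] by (simp add: hom_def assocR[symmetric] cancel2 S_ob_def)
  show "\<exists>!f. f \<in> hom (S C) A B"
  proof (rule ex1I[where P="\<lambda>f. f \<in> hom (S C) A B" and a="(A, iv (snd B) \<cdot> snd A, B)"])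
    show "(A, iv (snd B) \<cdot> snd A, B) \<in> hom (S C) A B" by (rule w)
  next
    fix u assume u: "u \<in> hom (S C) A B"
    obtain A' m B' where ue: "u = (A', m, B')" by (cases u) auto
    have m: "A' = A" "B' = B" "m \<in> Ar" "cd m = fst B" "snd B \<cdot> m = snd A" using u ue by (auto simp: hom_def)
    have "iv (snd B) \<cdot> (snd B \<cdot> m) = m" by (rule cancel1) (use m B b in simp_all)
    then show "u = (A, iv (snd B) \<cdot> snd A, B)" using m ue by simp
  qed
qed


lemma S_tenA_hom: assumes f: "f \<in> mAr (S C)" and g: "g \<in> mAr (S C)"
  shows "mTenA (S C) f g \<in> hom (S C) (mTen (S C) (mDom (S C) f) (mDom (S C) g)) (mTen (S C) (mCod (S C) f) (mCod (S C) g))"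
proof -
  obtain A m B where fe: "f = (A, m, B)" by (cases f) auto
  obtain A' n B' where ge: "g = (A', n, B')" by (cases g) auto
  have m: "A \<in> S_ob C" "B \<in> S_ob C" "m \<in> Ar" "dm m = fst A" "cd m = fst B" "snd B \<cdot> m = snd A"
    using f fe by (auto simp: hom_def)
  have n: "A' \<in> S_ob C" "B' \<in> S_ob C" "n \<in> Ar" "dm n = fst A'" "cd n = fst B'" "snd B' \<cdot> n = snd A'"
    using g ge by (auto simp: hom_def)
  note b = S_ob_E[OF m(2)] and b' = S_ob_E[OF n(2)]
  have "(lu I \<cdot> (snd B \<odot> snd B')) \<cdot> (m \<odot> n) = lu I \<cdot> ((snd B \<odot> snd B') \<cdot> (m \<odot> n))"
    using m n b b' by (simp add: assocR)
  also have "\<dots> = lu I \<cdot> ((snd B \<cdot> m) \<odot> (snd B' \<cdot> n))"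
    using m(1-5) n(1-5) b b' by (simp add: tenA_comp)
  also have "\<dots> = lu I \<cdot> (snd A \<odot> snd A')" using m n by simp
  finally have e: "(lu I \<cdot> (snd B \<odot> snd B')) \<cdot> (m \<odot> n) = lu I \<cdot> (snd A \<odot> snd A')" .
  show ?thesis using m n e S_ten_ob by (simp add: fe ge hom_def)
qed

lemma S_assoc_hom: assumes A: "A \<in> S_ob C" and B: "B \<in> S_ob C" and D: "D \<in> S_ob C"
  shows "mAssoc (S C) A B D \<in> hom (S C) (mTen (S C) (mTen (S C) A B) D) (mTen (S C) A (mTen (S C) B D))"
proof -
  note x = S_ob_E[OF A] and y = S_ob_E[OF B] and z = S_ob_E[OF D]
  define X where "X = fst A" define Y where "Y = fst B" define Z where "Z = fst D"
  define p where "p = snd A" define q where "q = snd B" define r where "r = snd D"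
  have xs: "X \<in> Ob" "Y \<in> Ob" "Z \<in> Ob" "p \<in> Ar" "q \<in> Ar" "r \<in> Ar" "dm p = X" "dm q = Y" "dm r = Z"
     "cd p = I" "cd q = I" "cd r = I"
    using x y z by (simp_all add: X_def Y_def Z_def p_def q_def r_def)
  have "(lu I \<cdot> (p \<odot> (lu I \<cdot> (q \<odot> r)))) \<cdot> a X Y Z = lu I \<cdot> ((p \<odot> (lu I \<cdot> (q \<odot> r))) \<cdot> a X Y Z)"
    using xs by (simp add: assocR)
  also have "\<dots> = lu I \<cdot> (((ii I \<odot> lu I) \<cdot> (p \<odot> (q \<odot> r))) \<cdot> a X Y Z)"
    using xs tenA_comp[of p "ii I" "q \<odot> r" "lu I"] by simp
  also have "\<dots> = lu I \<cdot> ((ii I \<odot> lu I) \<cdot> ((p \<odot> (q \<odot> r)) \<cdot> a X Y Z))"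
    using xs by (simp add: assocR)
  also have "\<dots> = lu I \<cdot> ((ii I \<odot> lu I) \<cdot> (a I I I \<cdot> ((p \<odot> q) \<odot> r)))"
    using xs a_nat[of p q r] by simp
  also have "\<dots> = lu I \<cdot> (((ii I \<odot> lu I) \<cdot> a I I I) \<cdot> ((p \<odot> q) \<odot> r))"
    using xs by (simp add: assoc)
  also have "\<dots> = lu I \<cdot> ((ru I \<odot> ii I) \<cdot> ((p \<odot> q) \<odot> r))" by (simp add: tri)
  also have "\<dots> = lu I \<cdot> ((ru I \<cdot> (p \<odot> q)) \<odot> (ii I \<cdot> r))"
    using xs tenA_comp[of "p \<odot> q" "ru I" r "ii I"] by simp
  also have "\<dots> = lu I \<cdot> ((lu I \<cdot> (p \<odot> q)) \<odot> r)" using xs by (simp add: lu_ru_I)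
  finally have e: "(lu I \<cdot> (p \<odot> (lu I \<cdot> (q \<odot> r)))) \<cdot> a X Y Z = lu I \<cdot> ((lu I \<cdot> (p \<odot> q)) \<odot> r)" .
  have t: "mTen (S C) (mTen (S C) A B) D \<in> S_ob C" "mTen (S C) A (mTen (S C) B D) \<in> S_ob C"
    using A B D by (simp_all only: S_ten_ob)
  show ?thesis using e xs t
    by (simp add: hom_def X_def Y_def Z_def p_def q_def r_def)
qed

lemma S_lu_hom: assumes A: "A \<in> S_ob C"
  shows "mLu (S C) A \<in> hom (S C) (mTen (S C) (mUnit (S C)) A) A"
proof -
  note x = S_ob_E[OF A]
  have e: "snd A \<cdot> lu (fst A) = lu I \<cdot> (ii I \<odot> snd A)" using l_nat[of "snd A"] x by simp
  show ?thesis using e x A S_ten_ob[OF S_unit_ob A] by (simp add: hom_def)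
qed

lemma S_ru_hom: assumes A: "A \<in> S_ob C"
  shows "mRu (S C) A \<in> hom (S C) (mTen (S C) A (mUnit (S C))) A"
proof -
  note x = S_ob_E[OF A]
  have e: "snd A \<cdot> ru (fst A) = lu I \<cdot> (snd A \<odot> ii I)" using r_nat[of "snd A"] x by (simp add: lu_ru_I)
  show ?thesis using e x A S_ten_ob[OF A S_unit_ob] by (simp add: hom_def)
qed

lemma S_mon: "monoidal (S C)"
  apply (rule uhom_monoidal[OF S_cat S_uhom])
  subgoal using S_unit_ob by simp
  subgoal using S_ten_ob by simp
  subgoal by (rule S_tenA_hom)
  subgoal by (rule S_assoc_hom) simp_all
  subgoal by (rule S_lu_hom) simp
  subgoal by (rule S_ru_hom) simp
  done

lemma S_inZ: "in_Z (S C)" by (simp add: in_Z_iff S_mon S_uhom)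


lemma eps_strong: "strong_monoidal (S C) C (eps C)"
  unfolding strong_monoidal_def is_functor_def
proof (intro conjI ballI impI)
  show "monoidal (S C)" by (rule S_mon)
  show "monoidal C" by (rule mon)
next
  fix X assume X: "X \<in> mOb (S C)"
  note x = S_ob_E[of X]
  show "fO (eps C) X \<in> mOb C" using X x by (simp add: eps_def)
  show "fA (eps C) (mId (S C) X) = mId C (fO (eps C) X)" by (simp add: eps_def)
next
  fix f assume f: "f \<in> mAr (S C)"
  obtain A m B where fe: "f = (A, m, B)" by (cases f) auto
  show "fA (eps C) f \<in> hom C (fO (eps C) (mDom (S C) f)) (fO (eps C) (mCod (S C) f))"
    using f by (simp add: fe eps_def hom_def)
next
  fix f g assume f: "f \<in> mAr (S C)" and g: "g \<in> mAr (S C)"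
  obtain A m B where fe: "f = (A, m, B)" by (cases f) auto
  obtain A' n B' where ge: "g = (A', n, B')" by (cases g) auto
  show "fA (eps C) (mComp (S C) g f) = mComp C (fA (eps C) g) (fA (eps C) f)"
    by (simp add: fe ge eps_def)
  have m: "m \<in> Ar" "dm m = fst A" "cd m = fst B" and n: "n \<in> Ar" "dm n = fst A'" "cd n = fst B'"
    using f g fe ge by (auto simp: hom_def)
  have a: "fst A \<in> Ob" "fst A' \<in> Ob" "fst B \<in> Ob" "fst B' \<in> Ob" using m n by (metis ms(1,2))+
  show "mComp C (fPhi (eps C) (mCod (S C) f) (mCod (S C) g)) (mTenA C (fA (eps C) f) (fA (eps C) g)) =
         mComp C (fA (eps C) (mTenA (S C) f g)) (fPhi (eps C) (mDom (S C) f) (mDom (S C) g))"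
    using m n a by (simp add: fe ge eps_def)
next
  show "fPhi0 (eps C) \<in> hom C (mUnit C) (fO (eps C) (mUnit (S C)))" by (simp add: eps_def hom_def)
  show "iso C (fPhi0 (eps C))" by (simp add: eps_def iso_id)
next
  fix X Y assume X: "X \<in> mOb (S C)" and Y: "Y \<in> mOb (S C)"
  have x: "fst X \<in> Ob" "fst Y \<in> Ob" using X Y S_ob_E by auto
  show "fPhi (eps C) X Y \<in> hom C (mTen C (fO (eps C) X) (fO (eps C) Y)) (fO (eps C) (mTen (S C) X Y))"
    using x by (simp add: eps_def hom_def)
  show "iso C (fPhi (eps C) X Y)" using x by (simp add: eps_def iso_id)
next
  fix X Y Z assume X: "X \<in> mOb (S C)" and Y: "Y \<in> mOb (S C)" and Z: "Z \<in> mOb (S C)"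
  have x: "fst X \<in> Ob" "fst Y \<in> Ob" "fst Z \<in> Ob" using X Y Z S_ob_E by auto
  show "mComp C (fA (eps C) (mAssoc (S C) X Y Z))
           (mComp C (fPhi (eps C) (mTen (S C) X Y) Z) (mTenA C (fPhi (eps C) X Y) (mId C (fO (eps C) Z)))) =
         mComp C (fPhi (eps C) X (mTen (S C) Y Z))
           (mComp C (mTenA C (mId C (fO (eps C) X)) (fPhi (eps C) Y Z))
              (mAssoc C (fO (eps C) X) (fO (eps C) Y) (fO (eps C) Z)))"
    using x by (simp add: eps_def tenA_id)
next
  fix X assume X: "X \<in> mOb (S C)"
  have x: "fst X \<in> Ob" using X S_ob_E by auto
  show "mLu C (fO (eps C) X) = mComp C (fA (eps C) (mLu (S C) X))
           (mComp C (fPhi (eps C) (mUnit (S C)) X) (mTenA C (fPhi0 (eps C)) (mId C (fO (eps C) X))))"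
    using x by (simp add: eps_def tenA_id)
  show "mRu C (fO (eps C) X) = mComp C (fA (eps C) (mRu (S C) X))
           (mComp C (fPhi (eps C) X (mUnit (S C))) (mTenA C (mId C (fO (eps C) X)) (fPhi0 (eps C))))"
    using x by (simp add: eps_def tenA_id)
qed


lemma S_hom_iff: "(A, m, B) \<in> hom (S C) A' B' \<longleftrightarrow> A = A' \<and> B = B' \<and> A \<in> S_ob C \<and> B \<in> S_ob C \<and>
   m \<in> Ar \<and> dm m = fst A \<and> cd m = fst B \<and> snd B \<cdot> m = snd A"
  by (auto simp: hom_def)

lemma S_hom_D: assumes "w \<in> hom (S C) A B"
  shows "w = (A, fst (snd w), B)" "A \<in> S_ob C" "B \<in> S_ob C" "fst (snd w) \<in> Ar" "dm (fst (snd w)) = fst A"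
    "cd (fst (snd w)) = fst B" "snd B \<cdot> fst (snd w) = snd A"
  using assms by (auto simp: hom_def)

lemma corefl_univ_S:
  fixes N :: "('q,'c) mcat" and F :: "('q,'c,'o,'a) smf"
  shows "corefl_univ C (S C) (eps C) N F"
  unfolding corefl_univ_def
proof (intro impI, elim conjE)
  assume zN: "in_Z N" and sF: "strong_monoidal N C F"
  have mN: "monoidal N" and uN: "uhom N" using zN by (auto simp: in_Z_iff)
  have catN: "category N" using mN by (rule mon_cat)
  note F = sm_facts[OF sF] and F' = sm_more[OF sF]
  define IN where "IN = mUnit N"
  have IN: "IN \<in> mOb N" unfolding IN_def using mN by simp
  define u where "u X = (THE f. f \<in> hom N X IN)" for X
  have uh: "u X \<in> hom N X IN" if "X \<in> mOb N" for X unfolding u_def by (rule uhom_the[OF uN that IN])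
  have ua: "u X \<in> mAr N" "mDom N (u X) = X" "mCod N (u X) = IN" if "X \<in> mOb N" for X
    using uh[OF that] by (simp_all add: hom_def)
  define i0 where "i0 = iv (fPhi0 F)"
  have p0: "fPhi0 F \<in> Ar" "dm (fPhi0 F) = I" "cd (fPhi0 F) = fO F IN" using F(5) by (simp_all add: hom_def IN_def)
  have i0: "i0 \<in> Ar" "dm i0 = fO F IN" "cd i0 = I" "i0 \<cdot> fPhi0 F = ii I" "fPhi0 F \<cdot> i0 = ii (fO F IN)" "iso C i0"
    using inv_props[OF F'(3)] iso_inv[OF F'(3)] p0 by (simp_all add: i0_def)
  have FA: "fA F f \<in> Ar" "dm (fA F f) = fO F (mDom N f)" "cd (fA F f) = fO F (mCod N f)" if "f \<in> mAr N" for f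
    using F(4)[OF that] by (simp_all add: hom_def)
  have FO: "fO F X \<in> Ob" if "X \<in> mOb N" for X using F(3)[OF that] .
  have Fu_iso: "iso C (fA F (u X))" if "X \<in> mOb N" for X
    by (rule sm_iso[OF sF uiso[OF catN uN ua(1)[OF that]]])
  define x where "x X = i0 \<cdot> fA F (u X)" for X
  have xa: "x X \<in> Ar" "dm (x X) = fO F X" "cd (x X) = I" if "X \<in> mOb N" for X
    using FA[OF ua(1)[OF that]] ua[OF that] i0 that by (simp_all add: x_def)
  have xiso: "iso C (x X)" if "X \<in> mOb N" for X
    unfolding x_def by (rule iso_comp[OF Fu_iso[OF that] i0(6)]) (use FA[OF ua(1)[OF that]] ua[OF that] i0 in simp)
  define GO where "GO X = (fO F X, x X)" for X
  have GO: "GO X \<in> S_ob C" if "X \<in> mOb N" for X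
    unfolding GO_def S_ob_iff using xa[OF that] xiso[OF that] FO[OF that] by simp
  have xnat: "x (mCod N f) \<cdot> fA F f = x (mDom N f)" if f: "f \<in> mAr N" for f
  proof -
    have d: "mDom N f \<in> mOb N" "mCod N f \<in> mOb N" using f catN by (simp_all add: c_dom c_cod)
    have "mComp N (u (mCod N f)) f \<in> hom N (mDom N f) IN"
      by (rule comp_hom[OF catN _ uh[OF d(2)]]) (use f in \<open>simp add: hom_def\<close>)
    then have uu: "mComp N (u (mCod N f)) f = u (mDom N f)" by (rule uhom_hom_eq[OF catN uN _ uh[OF d(1)]])
    have "x (mCod N f) \<cdot> fA F f = i0 \<cdot> (fA F (u (mCod N f)) \<cdot> fA F f)"
      unfolding x_def using i0 FA[OF f] FA[OF ua(1)[OF d(2)]] ua[OF d(2)] by (simp add: assocR)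
    also have "\<dots> = i0 \<cdot> fA F (mComp N (u (mCod N f)) f)"
      using F'(2)[OF f ua(1)[OF d(2)]] ua[OF d(2)] by simp
    also have "\<dots> = x (mDom N f)" by (simp add: uu x_def)
    finally show ?thesis .
  qed
  have uIN: "u IN = mId N IN"
    by (rule uhom_hom_eq[OF catN uN uh[OF IN]]) (use IN catN in \<open>simp add: hom_def\<close>)
  have xIN: "x IN = i0" unfolding x_def uIN using F'(1)[OF IN] i0 by simp
  have xphi: "x (mTen N X Y) \<cdot> fPhi F X Y = lu I \<cdot> (x X \<odot> x Y)" if X: "X \<in> mOb N" and Y: "Y \<in> mOb N" for X Y
  proof -
    let ?FA = "fA F" and ?P = "fPhi F" and ?lN = "mLu N IN"
    define uX where "uX = u X" define uY where "uY = u Y"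
    have uX: "uX \<in> mAr N" "mDom N uX = X" "mCod N uX = IN" using ua[OF X] by (simp_all add: uX_def)
    have uY: "uY \<in> mAr N" "mDom N uY = Y" "mCod N uY = IN" using ua[OF Y] by (simp_all add: uY_def)
    have XY: "mTen N X Y \<in> mOb N" "mTen N IN IN \<in> mOb N" using X Y IN mN by simp_all
    have tu: "mTenA N uX uY \<in> mAr N" "mDom N (mTenA N uX uY) = mTen N X Y" "mCod N (mTenA N uX uY) = mTen N IN IN"
      using uX uY mN by simp_all
    have lN: "?lN \<in> mAr N" "mDom N ?lN = mTen N IN IN" "mCod N ?lN = IN" using IN mN by (simp_all add: IN_def)
    have c1: "mComp N ?lN (mTenA N uX uY) \<in> hom N (mTen N X Y) IN"
      using tu lN catN by (simp add: hom_def)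
    have u1: "u (mTen N X Y) = mComp N ?lN (mTenA N uX uY)"
      by (rule uhom_hom_eq[OF catN uN uh[OF XY(1)] c1])
    have u2: "?FA (u (mTen N X Y)) = ?FA ?lN \<cdot> ?FA (mTenA N uX uY)"
      unfolding u1 by (rule F'(2)) (use tu lN in simp_all)
    have n3: "?FA (mTenA N uX uY) \<cdot> ?P X Y = ?P IN IN \<cdot> (?FA uX \<odot> ?FA uY)"
      using F'(4)[OF uX(1) uY(1)] uX uY by simp
    note FAlN = FA[OF lN(1)] and FAt = FA[OF tu(1)] and FAX = FA[OF uX(1)] and FAY = FA[OF uY(1)]
    have P: "?P X Y \<in> Ar" "dm (?P X Y) = tn (fO F X) (fO F Y)" "cd (?P X Y) = fO F (mTen N X Y)"
      using F(6)[OF X Y] by (simp_all add: hom_def)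
    have PI: "?P IN IN \<in> Ar" "dm (?P IN IN) = tn (fO F IN) (fO F IN)" "cd (?P IN IN) = fO F (mTen N IN IN)"
      using F(6)[OF IN IN] by (simp_all add: hom_def)
    have FI: "fO F IN \<in> Ob" "fO F X \<in> Ob" "fO F Y \<in> Ob" using FO IN X Y by auto
    have l4: "lu (fO F IN) = ?FA ?lN \<cdot> (?P IN IN \<cdot> (fPhi0 F \<odot> ii (fO F IN)))"
      using F'(5)[OF IN] by (simp add: IN_def)
    have "lu (fO F IN) \<cdot> (i0 \<odot> ii (fO F IN)) = (?FA ?lN \<cdot> (?P IN IN \<cdot> (fPhi0 F \<odot> ii (fO F IN)))) \<cdot> (i0 \<odot> ii (fO F IN))"
      by (simp only: l4)
    also have "\<dots> = ?FA ?lN \<cdot> (?P IN IN \<cdot> ((fPhi0 F \<odot> ii (fO F IN)) \<cdot> (i0 \<odot> ii (fO F IN))))"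
      using FAlN lN PI p0 i0 FI by (simp add: assocR)
    also have "\<dots> = ?FA ?lN \<cdot> (?P IN IN \<cdot> ((fPhi0 F \<cdot> i0) \<odot> (ii (fO F IN) \<cdot> ii (fO F IN))))"
      using p0 i0 FI tenA_comp[of i0 "fPhi0 F" "ii (fO F IN)" "ii (fO F IN)"] by simp
    also have "\<dots> = ?FA ?lN \<cdot> ?P IN IN"
      using FAlN lN PI p0 i0 FI by (simp add: tenA_id)
    finally have l5: "?FA ?lN \<cdot> ?P IN IN = lu (fO F IN) \<cdot> (i0 \<odot> ii (fO F IN))" by simp
    have l6: "i0 \<cdot> lu (fO F IN) = lu I \<cdot> (ii I \<odot> i0)" using l_nat[OF i0(1)] i0 by simp
    have "x (mTen N X Y) \<cdot> ?P X Y = (i0 \<cdot> (?FA ?lN \<cdot> ?FA (mTenA N uX uY))) \<cdot> ?P X Y"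
      by (simp add: x_def u2)
    also have "\<dots> = i0 \<cdot> (?FA ?lN \<cdot> (?FA (mTenA N uX uY) \<cdot> ?P X Y))"
      using i0 FAlN FAt lN tu P by (simp add: assocR)
    also have "\<dots> = i0 \<cdot> (?FA ?lN \<cdot> (?P IN IN \<cdot> (?FA uX \<odot> ?FA uY)))" by (simp only: n3)
    also have "\<dots> = (i0 \<cdot> (?FA ?lN \<cdot> ?P IN IN)) \<cdot> (?FA uX \<odot> ?FA uY)"
      using i0 FAlN lN PI FAX FAY uX uY by (simp add: assoc)
    also have "\<dots> = (i0 \<cdot> (lu (fO F IN) \<cdot> (i0 \<odot> ii (fO F IN)))) \<cdot> (?FA uX \<odot> ?FA uY)" by (simp only: l5)
    also have "\<dots> = ((i0 \<cdot> lu (fO F IN)) \<cdot> (i0 \<odot> ii (fO F IN))) \<cdot> (?FA uX \<odot> ?FA uY)"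
      using i0 FI by (simp add: assoc)
    also have "\<dots> = ((lu I \<cdot> (ii I \<odot> i0)) \<cdot> (i0 \<odot> ii (fO F IN))) \<cdot> (?FA uX \<odot> ?FA uY)" by (simp only: l6)
    also have "\<dots> = lu I \<cdot> (((ii I \<odot> i0) \<cdot> (i0 \<odot> ii (fO F IN))) \<cdot> (?FA uX \<odot> ?FA uY))"
      using i0 FI FAX FAY uX uY by (simp add: assocR)
    also have "(ii I \<odot> i0) \<cdot> (i0 \<odot> ii (fO F IN)) = i0 \<odot> i0"
      using i0 FI tenA_comp[of i0 "ii I" "ii (fO F IN)" i0] by simp
    also have "lu I \<cdot> ((i0 \<odot> i0) \<cdot> (?FA uX \<odot> ?FA uY)) = lu I \<cdot> ((i0 \<cdot> ?FA uX) \<odot> (i0 \<cdot> ?FA uY))"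
      using i0 FI FAX FAY uX uY tenA_comp[of "?FA uX" i0 "?FA uY" i0] by simp
    also have "\<dots> = lu I \<cdot> (x X \<odot> x Y)" by (simp add: x_def uX_def uY_def)
    finally show ?thesis .
  qed
  show "(\<exists>G. strong_monoidal N (S C) G \<and> smf_eq N (smf_comp C (eps C) G) F) \<and>
    (\<forall>G G'. strong_monoidal N (S C) G \<and> smf_eq N (smf_comp C (eps C) G) F \<and>
             strong_monoidal N (S C) G' \<and> smf_eq N (smf_comp C (eps C) G') F \<longrightarrow> smf_eq N G G')"
  proof (intro conjI allI impI)
    define G :: "('q, 'c, 'o \<times> 'a, ('o \<times> 'a) \<times> 'a \<times> ('o \<times> 'a)) smf" where
      "G = \<lparr>fO = GO, fA = (\<lambda>f. (GO (mDom N f), fA F f, GO (mCod N f))),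
            fPhi = (\<lambda>X Y. (mTen (S C) (GO X) (GO Y), fPhi F X Y, GO (mTen N X Y))),
            fPhi0 = (mUnit (S C), fPhi0 F, GO IN)\<rparr>"
    have sG: "strong_monoidal N (S C) G"
    proof (rule uhom_strong[OF mN S_mon S_uhom])
      fix X assume "X \<in> mOb N" then show "fO G X \<in> mOb (S C)" using GO by (simp add: G_def)
    next
      fix f assume f: "f \<in> mAr N"
      have d: "mDom N f \<in> mOb N" "mCod N f \<in> mOb N" using f catN by (simp_all add: c_dom c_cod)
      show "fA G f \<in> hom (S C) (fO G (mDom N f)) (fO G (mCod N f))"
        unfolding G_def using GO[OF d(1)] GO[OF d(2)] FA[OF f] xnat[OF f]
        by (simp only: simp_thms select_convs S_hom_iff) (simp add: GO_def)
    next
      have e: "x IN \<cdot> fPhi0 F = ii I" using xIN i0 by simp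
      show "fPhi0 G \<in> hom (S C) (mUnit (S C)) (fO G (mUnit N))"
        unfolding G_def IN_def[symmetric] using S_unit_ob GO[OF IN] p0 e
        by (simp only: simp_thms select_convs S_hom_iff S_simps(9)) (simp add: GO_def)
    next
      fix X Y assume X: "X \<in> mOb N" and Y: "Y \<in> mOb N"
      have XY: "mTen N X Y \<in> mOb N" using X Y mN by simp
      have P: "fPhi F X Y \<in> Ar" "dm (fPhi F X Y) = tn (fO F X) (fO F Y)" "cd (fPhi F X Y) = fO F (mTen N X Y)"
        using F(6)[OF X Y] by (simp_all add: hom_def)
      have t: "mTen (S C) (GO X) (GO Y) \<in> S_ob C" using S_ten_ob GO X Y by blast
      show "fPhi G X Y \<in> hom (S C) (mTen (S C) (fO G X) (fO G Y)) (fO G (mTen N X Y))"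
        unfolding G_def using t GO[OF XY] P xphi[OF X Y]
        by (simp only: simp_thms select_convs S_hom_iff) (simp add: GO_def)
    qed
    have cG: "smf_eq N (smf_comp C (eps C) G) F"
      unfolding smf_eq_def
    proof (intro conjI ballI)
      fix X assume "X \<in> mOb N" then show "fO (smf_comp C (eps C) G) X = fO F X"
        by (simp add: smf_comp_def eps_def G_def GO_def)
    next
      fix f assume "f \<in> mAr N" then show "fA (smf_comp C (eps C) G) f = fA F f"
        by (simp add: smf_comp_def eps_def G_def)
    next
      fix X Y assume X: "X \<in> mOb N" and Y: "Y \<in> mOb N"
      have P: "fPhi F X Y \<in> Ar" "dm (fPhi F X Y) = tn (fO F X) (fO F Y)"
        using F(6)[OF X Y] by (simp_all add: hom_def)
      show "fPhi (smf_comp C (eps C) G) X Y = fPhi F X Y"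
        using P by (simp add: smf_comp_def eps_def G_def GO_def)
    next
      show "fPhi0 (smf_comp C (eps C) G) = fPhi0 F"
        using p0 by (simp add: smf_comp_def eps_def G_def)
    qed
    show "\<exists>G. strong_monoidal N (S C) G \<and> smf_eq N (smf_comp C (eps C) G) F"
      using sG cG by blast
  next
    have det: "fO H X = GO X" if sH: "strong_monoidal N (S C) H" and cH: "smf_eq N (smf_comp C (eps C) H) F"
      and X: "X \<in> mOb N" for H :: "('q, 'c, 'o \<times> 'a, ('o \<times> 'a) \<times> 'a \<times> ('o \<times> 'a)) smf" and X
    proof -
      note Hf = sm_facts[OF sH]
      have o: "fst (fO H Z) = fO F Z" if "Z \<in> mOb N" for Z
        using cH that by (simp add: smf_eq_def smf_comp_def eps_def)
      have a: "fst (snd (fA H f)) = fA F f" if "f \<in> mAr N" for f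
        using cH that by (simp add: smf_eq_def smf_comp_def eps_def)
      have h0: "fPhi0 H \<in> hom (S C) (mUnit (S C)) (fO H IN)" using Hf(5) by (simp add: IN_def)
      note h0d = S_hom_D[OF h0]
      have "mComp C (fst (snd (fPhi0 H))) (ii I) = fPhi0 F"
        using cH by (simp add: smf_eq_def smf_comp_def eps_def)
      then have m0: "fst (snd (fPhi0 H)) = fPhi0 F" using h0d(4,5) by simp
      have HIN: "fO H IN \<in> S_ob C" using Hf(3)[OF IN] by simp
      note hin = S_ob_E[OF HIN]
      have oIN: "fst (fO H IN) = fO F IN" by (rule o[OF IN])
      have e0: "snd (fO H IN) \<cdot> fPhi0 F = ii I" using h0d(7) m0 by simp
      have "snd (fO H IN) = snd (fO H IN) \<cdot> (fPhi0 F \<cdot> i0)" using i0 hin oIN by simp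
      also have "\<dots> = (snd (fO H IN) \<cdot> fPhi0 F) \<cdot> i0" by (rule assoc) (use i0 hin oIN p0 in simp_all)
      also have "\<dots> = i0" using e0 i0 by simp
      finally have sIN: "snd (fO H IN) = i0" .
      have hu: "fA H (u X) \<in> hom (S C) (fO H X) (fO H IN)" using Hf(4)[OF ua(1)[OF X]] ua[OF X] by simp
      note hud = S_hom_D[OF hu]
      have "snd (fO H X) = i0 \<cdot> fA F (u X)" using hud(7) a[OF ua(1)[OF X]] sIN by simp
      then have "snd (fO H X) = x X" by (simp add: x_def)
      then show ?thesis using o[OF X] by (simp add: GO_def prod_eq_iff)
    qed
    fix G G' :: "('q, 'c, 'o \<times> 'a, ('o \<times> 'a) \<times> 'a \<times> ('o \<times> 'a)) smf"
    assume H: "strong_monoidal N (S C) G \<and> smf_eq N (smf_comp C (eps C) G) F \<and>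
             strong_monoidal N (S C) G' \<and> smf_eq N (smf_comp C (eps C) G') F"
    then have sG: "strong_monoidal N (S C) G" and sG': "strong_monoidal N (S C) G'"
      and cG: "smf_eq N (smf_comp C (eps C) G) F" and cG': "smf_eq N (smf_comp C (eps C) G') F" by auto
    have oo: "fO G X = fO G' X" if "X \<in> mOb N" for X using det[OF sG cG that] det[OF sG' cG' that] by simp
    note G1 = sm_facts[OF sG] and G2 = sm_facts[OF sG']
    note E = uhom_hom_eq[OF S_cat S_uhom]
    show "smf_eq N G G'" unfolding smf_eq_def
    proof (intro conjI ballI)
      fix X assume "X \<in> mOb N" then show "fO G X = fO G' X" by (rule oo)
    next
      fix f assume f: "f \<in> mAr N"
      have d: "mDom N f \<in> mOb N" "mCod N f \<in> mOb N" using f catN by (simp_all add: c_dom c_cod)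
      show "fA G f = fA G' f" by (rule E[OF G1(4)[OF f]]) (use G2(4)[OF f] oo[OF d(1)] oo[OF d(2)] in simp)
    next
      fix X Y assume X: "X \<in> mOb N" and Y: "Y \<in> mOb N"
      have XY: "mTen N X Y \<in> mOb N" using X Y mN by simp
      show "fPhi G X Y = fPhi G' X Y"
        by (rule E[OF G1(6)[OF X Y]]) (use G2(6)[OF X Y] oo[OF X] oo[OF Y] oo[OF XY] in simp)
    next
      show "fPhi0 G = fPhi0 G'"
        by (rule E[OF G1(5)]) (use G2(5) oo[OF IN] in \<open>simp add: IN_def\<close>)
    qed
  qed
qed


end

context symcat
begin

lemma Ssym_hom: assumes A: "A \<in> S_ob C" and B: "B \<in> S_ob C"
  shows "Ssym C s A B \<in> hom (S C) (mTen (S C) A B) (mTen (S C) B A)"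
proof -
  note x = S_ob_E[OF A] and y = S_ob_E[OF B]
  have "(lu I \<cdot> (snd B \<odot> snd A)) \<cdot> s (fst A) (fst B) = lu I \<cdot> ((snd B \<odot> snd A) \<cdot> s (fst A) (fst B))"
    using x y by (simp add: assocR)
  also have "\<dots> = lu I \<cdot> (s I I \<cdot> (snd A \<odot> snd B))" using s_nat[of "snd A" "snd B"] x y by simp
  also have "\<dots> = (lu I \<cdot> s I I) \<cdot> (snd A \<odot> snd B)" using x y by (simp add: assoc)
  also have "\<dots> = lu I \<cdot> (snd A \<odot> snd B)" by (simp add: lu_sII)
  finally have e: "(lu I \<cdot> (snd B \<odot> snd A)) \<cdot> s (fst A) (fst B) = lu I \<cdot> (snd A \<odot> snd B)" .
  have t: "mTen (S C) A B \<in> S_ob C" "mTen (S C) B A \<in> S_ob C" using A B by (simp_all only: S_ten_ob)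
  show ?thesis using e x y t by (simp add: hom_def Ssym_def)
qed

lemma S_sym: "symmetric (S C) (Ssym C s)"
  by (rule uhom_symmetric[OF S_mon S_uhom]) (simp only: S_simps(1) Ssym_hom)

lemma eps_symstrong: "symmetric_strong_monoidal (S C) (Ssym C s) C s (eps C)"
  unfolding symmetric_strong_monoidal_def
proof (intro conjI ballI)
  show "symmetric (S C) (Ssym C s)" by (rule S_sym)
  show "symmetric C s" by (rule sym)
  show "strong_monoidal (S C) C (eps C)" by (rule eps_strong)
next
  fix X Y assume X: "X \<in> mOb (S C)" and Y: "Y \<in> mOb (S C)"
  have x: "fst X \<in> Ob" "fst Y \<in> Ob" using X Y S_ob_E by auto
  show "mComp C (fA (eps C) (Ssym C s X Y)) (fPhi (eps C) X Y) = mComp C (fPhi (eps C) Y X) (s (fO (eps C) X) (fO (eps C) Y))"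
    using x by (simp add: eps_def Ssym_def)
qed


lemma sym_corefl_univ_S:
  fixes N :: "('q,'c) mcat"
  shows "sym_corefl_univ C (S C) (Ssym C s) (eps C) s N t F"
  unfolding sym_corefl_univ_def
proof (intro impI, elim conjE)
  assume zN: "in_Z N" and sF: "symmetric_strong_monoidal N t C s F"
  have sF': "strong_monoidal N C F" and tN: "symmetric N t" using sF by (auto simp: symmetric_strong_monoidal_def)
  have RU: "corefl_univ C (S C) (eps C) N F" by (rule corefl_univ_S)
  then obtain G where G: "strong_monoidal N (S C) G" "smf_eq N (smf_comp C (eps C) G) F"
    using zN sF' unfolding corefl_univ_def by blast
  have U: "\<And>G G'. strong_monoidal N (S C) G \<Longrightarrow> smf_eq N (smf_comp C (eps C) G) F \<Longrightarrow>
             strong_monoidal N (S C) G' \<Longrightarrow> smf_eq N (smf_comp C (eps C) G') F \<Longrightarrow> smf_eq N G G'"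
    using RU zN sF' unfolding corefl_univ_def by blast
  have ss: "\<And>G. symmetric_strong_monoidal N t (S C) (Ssym C s) G \<Longrightarrow> strong_monoidal N (S C) G"
    by (simp add: symmetric_strong_monoidal_def)
  show "(\<exists>G. symmetric_strong_monoidal N t (S C) (Ssym C s) G \<and> smf_eq N (smf_comp C (eps C) G) F) \<and>
     (\<forall>G G'. symmetric_strong_monoidal N t (S C) (Ssym C s) G \<and> smf_eq N (smf_comp C (eps C) G) F \<and>
             symmetric_strong_monoidal N t (S C) (Ssym C s) G' \<and> smf_eq N (smf_comp C (eps C) G') F
             \<longrightarrow> smf_eq N G G')"
  proof (intro conjI allI impI)
    show "\<exists>G. symmetric_strong_monoidal N t (S C) (Ssym C s) G \<and> smf_eq N (smf_comp C (eps C) G) F"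
      using uhom_symstrong[OF tN S_sym G(1) S_uhom] G(2) by blast
  next
    fix G G' assume "symmetric_strong_monoidal N t (S C) (Ssym C s) G \<and> smf_eq N (smf_comp C (eps C) G) F \<and>
             symmetric_strong_monoidal N t (S C) (Ssym C s) G' \<and> smf_eq N (smf_comp C (eps C) G') F"
    then show "smf_eq N G G'" using U ss by blast
  qed
qed


end



theorem proposition9p3:
  fixes M :: "('o,'a) mcat" and s :: "'o \<Rightarrow> 'o \<Rightarrow> 'a"
  shows
   "(monoidal M \<longrightarrow>
       in_Z (R M) \<and> strong_monoidal M (R M) (eta M) \<and>
       (\<forall>(N :: ('p,'b) mcat) F. refl_univ M (R M) (eta M) N F) \<and>
       in_Z (S M) \<and> strong_monoidal (S M) M (eps M) \<and>
       (\<forall>(N :: ('q,'c) mcat) F. corefl_univ M (S M) (eps M) N F)) \<and>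
    (symmetric M s \<longrightarrow>
       symmetric_strong_monoidal M s (R M) (Rsym M) (eta M) \<and>
       (\<forall>(N :: ('p,'b) mcat) t F. sym_refl_univ M (R M) (Rsym M) (eta M) s N t F) \<and>
       symmetric_strong_monoidal (S M) (Ssym M s) M s (eps M) \<and>
       (\<forall>(N :: ('q,'c) mcat) t F. sym_corefl_univ M (S M) (Ssym M s) (eps M) s N t F))"
proof (intro conjI impI allI)
  assume mM: "monoidal M"
  interpret moncat M by (rule moncat.intro[OF mM])
  show "in_Z (R M)" by (rule R_inZ[OF mM])
  show "strong_monoidal M (R M) (eta M)" by (rule eta_strong[OF mM])
  show "\<And>N F. refl_univ M (R M) (eta M) N F" by (rule refl_univ_R[OF mM])
  show "in_Z (S M)" by (rule S_inZ)
  show "strong_monoidal (S M) M (eps M)" by (rule eps_strong)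
  show "\<And>N F. corefl_univ M (S M) (eps M) N F" by (rule corefl_univ_S)
next
  assume sM: "symmetric M s"
  have mM: "monoidal M" using sM by (simp add: symmetric_def)
  interpret symcat M s by (intro symcat.intro moncat.intro symcat_axioms.intro mM sM)
  show "symmetric_strong_monoidal M s (R M) (Rsym M) (eta M)" by (rule eta_symstrong[OF sM])
  show "\<And>N t F. sym_refl_univ M (R M) (Rsym M) (eta M) s N t F" by (rule sym_refl_univ_R[OF sM])
  show "symmetric_strong_monoidal (S M) (Ssym M s) M s (eps M)" by (rule eps_symstrong)
  show "\<And>N t F. sym_corefl_univ M (S M) (Ssym M s) (eps M) s N t F" by (rule sym_corefl_univ_S)
qed

end
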